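(* Let $n\ge2$, $\sigma>\tan^2\!\bigl(\tfrac{\pi}{2n}\bigr)$, let $Z_n$ be the Zolotarev polynomial for $\sigma$ and let $1<\alpha<\beta$ be such that $\{x\in\mathbb{C}: Z_n(x)\in[-L_n,L_n]\}=[-1,1]\cup[\alpha,\beta]$. Then: (i) if $n=2m+1$ ($m\ge1$), $$\beta^{m+1}\det\mathbf F+\beta^{m}\det\mathbf F_1+\dots+\beta\det\mathbf F_m+\det\mathbf F_{m+1}=0,$$ where $F_k,\mathbf F,\mathbf F_i$ are built from $s_k=\tfrac12(-\alpha^k-1-(-1)^k-\beta^k)$ with $\nu=m-1,\mu=m+1$; and $$-2\det\mathbf F_1+(\alpha-n\sigma)\det\mathbf F=0,$$ where $F_k,\mathbf F,\mathbf F_i$ are built from $s_k=\tfrac12(\alpha^k+1+(-1)^k+\beta^k)$ with $\nu=m+1,\mu=m-1$; (ii) if $n=2m+2$ ($m\ge0$), $$\alpha^{m+1}\det\mathbf F+\alpha^{m}\det\mathbf F_1+\dots+\alpha\det\mathbf F_m+\det\mathbf F_{m+1}=0,$$ where $F_k,\mathbf F,\mathbf F_i$ are built from $s_k=\tfrac12(-\alpha^k+1-(-1)^k-\beta^k)$ with $\nu=m,\mu=m+1$; and $$-2\det\mathbf F_1+(\alpha+1-n\sigma)\det\mathbf F=0,$$ where $F_k,\mathbf F,\mathbf F_i$ are built from $s_k=\tfrac12(\alpha^k+1+(-1)^k-\beta^k)$ with $\nu=m+1,\mu=m$.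
   Context: For $\sigma>0$, the Zolotarev polynomial $Z_n$ is the polynomial of the form $x^n-n\sigma x^{n-1}+a_{n-2}x^{n-2}+\dots+a_0$ ($a_j\in\mathbb{C}$) minimizing $\max_{x\in[-1,1]}|\cdot|$ among all such polynomials, and $L_n:=\max_{x\in[-1,1]}|Z_n(x)|$. It is known that for $\sigma>\tan^2(\pi/(2n))$ the set $Z_n^{-1}([-L_n,L_n])$ is $[-1,1]\cup[\alpha,\beta]$ with $1<\alpha<\beta$. Given complex numbers $s_1,s_2,\dots$: $F_0:=1$, $F_k:=0$ for $k<0$, and for $k\ge1$, $F_k:=\frac{(-1)^k}{k!}\det M_k$ where $M_k$ is the $k\times k$ matrix with entry $s_{i-j+1}$ for $j\le i$, entry $i$ at position $(i,i+1)$, and $0$ elsewhere. For integers $\nu\ge0,\mu\ge0$, $\mathbf F$ is the $\mu\times\mu$ matrix with $(i,j)$ entry $F_{\nu+i-j}$, and $\mathbf F_i$ ($1\le i\le\mu$) is $\mathbf F$ with its $i$-th column replaced by $(-F_{\nu+1},\dots,-F_{\nu+\mu})^T$. Convention: if $\mu=0$, $\det\mathbf F:=1$ and $\det\mathbf F_1:=0$. *)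

theory Defs
  imports Complex_Main "HOL-Computational_Algebra.Polynomial" "Jordan_Normal_Form.Determinant"
begin

definition zol_class :: "nat \<Rightarrow> real \<Rightarrow> complex poly set" where
  "zol_class n \<sigma> = {p. degree p = n \<and> coeff p n = 1 \<and>
      coeff p (n - 1) = - complex_of_real (real n * \<sigma>)}"

definition sup_norm_I :: "complex poly \<Rightarrow> real" where
  "sup_norm_I p = Sup ((\<lambda>x::real. cmod (poly p (complex_of_real x))) ` {-1..1})"

definition is_zolotarev :: "nat \<Rightarrow> real \<Rightarrow> complex poly \<Rightarrow> bool" where
  "is_zolotarev n \<sigma> Z \<longleftrightarrow> Z \<in> zol_class n \<sigma> \<and>
      (\<forall>P \<in> zol_class n \<sigma>. sup_norm_I Z \<le> sup_norm_I P)"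

text \<open>The k x k matrix M_k (0-indexed version of the 1-indexed definition).\<close>
definition Mmat :: "(nat \<Rightarrow> complex) \<Rightarrow> nat \<Rightarrow> complex mat" where
  "Mmat s k = mat k k (\<lambda>(i, j). if j \<le> i then s (i - j + 1)
                              else if j = i + 1 then of_nat (i + 1) else 0)"

definition Fk :: "(nat \<Rightarrow> complex) \<Rightarrow> int \<Rightarrow> complex" where
  "Fk s k = (if k < 0 then 0 else if k = 0 then 1
             else (-1) ^ nat k / of_nat (fact (nat k)) * det (Mmat s (nat k)))"

definition Fmat :: "(nat \<Rightarrow> complex) \<Rightarrow> nat \<Rightarrow> nat \<Rightarrow> complex mat" where
  "Fmat s \<nu> \<mu> = mat \<mu> \<mu> (\<lambda>(i, j). Fk s (int \<nu> + int i - int j))"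

text \<open>Fmat with its i-th column (1-indexed) replaced by (-F_{nu+1},...,-F_{nu+mu}).\<close>
definition Fmat_i :: "(nat \<Rightarrow> complex) \<Rightarrow> nat \<Rightarrow> nat \<Rightarrow> nat \<Rightarrow> complex mat" where
  "Fmat_i s \<nu> \<mu> c = mat \<mu> \<mu> (\<lambda>(i, j). if j + 1 = c then - Fk s (int \<nu> + int i + 1)
                                      else Fk s (int \<nu> + int i - int j))"

text \<open>det of F (for mu = 0 this is the empty determinant 1).\<close>
definition detF :: "(nat \<Rightarrow> complex) \<Rightarrow> nat \<Rightarrow> nat \<Rightarrow> complex" where
  "detF s \<nu> \<mu> = det (Fmat s \<nu> \<mu>)"

text \<open>det of F_i for 1 \<le> i \<le> mu; by convention det F_1 = 0 when mu = 0.\<close>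
definition detFi :: "(nat \<Rightarrow> complex) \<Rightarrow> nat \<Rightarrow> nat \<Rightarrow> nat \<Rightarrow> complex" where
  "detFi s \<nu> \<mu> c = (if \<mu> = 0 then 0 else det (Fmat_i s \<nu> \<mu> c))"

end

theory Submission
  imports Defs "HOL-Computational_Algebra.Formal_Power_Series" "HOL-Computational_Algebra.Polynomial_FPS" "HOL-Computational_Algebra.Fundamental_Theorem_Algebra"
begin



lemma prod_list_diag_fact:
  "prod_list (map (\<lambda>i. 1 + of_nat i :: complex) [0..<n]) = fact n"
  by (induction n) (auto simp: algebra_simps)

lemma newton_rec:
  fixes s :: "nat \<Rightarrow> complex"
  shows "of_nat k * Fk s (int k) = - (\<Sum>j<k. s (k - j) * Fk s (int j))"
proof (induction k rule: less_induct)
  case (less k)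
  show ?case
  proof (cases k)
    case 0 then show ?thesis by simp
  next
    case (Suc l)
    define M where "M = Mmat s k"
    define v where "v = vec k (\<lambda>j. Fk s (int j))"
    define c where "c = (\<Sum>j<k. s (k - j) * Fk s (int j))"
    define b where "b = vec k (\<lambda>i. if i = l then c else 0)"
    have M: "M \<in> carrier_mat k k" unfolding M_def Mmat_def by auto
    have v: "v \<in> carrier_vec k" unfolding v_def by auto
    have Mv: "M *\<^sub>v v = b"
    proof (rule eq_vecI)
      fix i assume i: "i < dim_vec b"
      hence ik: "i < k" by (simp add: b_def)
      have "(M *\<^sub>v v) $ i = (\<Sum>j<k. M $$ (i,j) * Fk s (int j))"
        using ik M v unfolding mult_mat_vec_def scalar_prod_def v_def
        by (auto simp: lessThan_atLeast0 intro!: sum.cong)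
      also have "\<dots> = (\<Sum>j\<in>{..i} \<union> (if i = l then {} else {Suc i}). M $$ (i,j) * Fk s (int j))"
        apply (rule sum.mono_neutral_right)
        using ik Suc by (auto simp: M_def Mmat_def)
      also have "\<dots> = b $ i"
      proof (cases "i = l")
        case True
        have "(\<Sum>j\<in>{..i}. M $$ (i,j) * Fk s (int j)) = (\<Sum>j\<in>{..<k}. s (k - j) * Fk s (int j))"
          using True Suc ik by (auto simp: M_def Mmat_def lessThan_Suc_atMost[symmetric] Suc_diff_le intro!: sum.cong)
        thus ?thesis using True ik by (simp add: b_def c_def)
      next
        case False
        hence il: "Suc i < k" using ik Suc by auto
        have "(\<Sum>j\<in>{..i} \<union> {Suc i}. M $$ (i,j) * Fk s (int j))
           = (\<Sum>j\<in>{..i}. M $$ (i,j) * Fk s (int j)) + M $$ (i, Suc i) * Fk s (int (Suc i))"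
          by (subst sum.union_disjoint) auto
        also have "(\<Sum>j\<in>{..i}. M $$ (i,j) * Fk s (int j)) = (\<Sum>j<Suc i. s (Suc i - j) * Fk s (int j))"
          using il by (auto simp: M_def Mmat_def lessThan_Suc_atMost Suc_diff_le intro!: sum.cong)
        also have "M $$ (i, Suc i) * Fk s (int (Suc i)) = of_nat (Suc i) * Fk s (int (Suc i))"
          using il by (simp add: M_def Mmat_def)
        also have "\<dots> = - (\<Sum>j<Suc i. s (Suc i - j) * Fk s (int j))"
          using less[of "Suc i"] il by simp
        finally show ?thesis using False ik by (simp add: b_def)
      qed
      finally show "(M *\<^sub>v v) $ i = b $ i" .
    qed (use M in \<open>auto simp: b_def\<close>)
    have "det (replace_col M (M *\<^sub>v v) 0) = v $ 0 * det M"
      by (rule cramer_lemma_mat[OF M v]) (simp add: Suc)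
    hence e1: "det (replace_col M b 0) = det M" unfolding Mv using Suc by (simp add: v_def Fk_def)
    define A where "A = replace_col M b 0"
    have A: "A \<in> carrier_mat k k" using M by (auto simp: A_def replace_col_def)
    have "det A = (\<Sum>i<k. A $$ (i,0) * cofactor A i 0)"
      by (rule laplace_expansion_column[OF A]) (simp add: Suc)
    also have "\<dots> = (\<Sum>i\<in>{l}. A $$ (i,0) * cofactor A i 0)"
      apply (rule sum.mono_neutral_right)
      using Suc M by (auto simp: A_def replace_col_def b_def)
    also have "\<dots> = c * cofactor A l 0"
      using Suc M by (simp add: A_def replace_col_def b_def)
    also have "cofactor A l 0 = (-1)^l * det (mat_delete A l 0)"
      by (simp add: cofactor_def)
    also have "det (mat_delete A l 0) = of_nat (fact l)"
    proof -
      have D: "mat_delete A l 0 \<in> carrier_mat l l" using A Suc by (auto simp: mat_delete_def)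
      have ent: "\<And>i j. i < l \<Longrightarrow> j < l \<Longrightarrow> mat_delete A l 0 $$ (i,j) = M $$ (i, Suc j)"
        using A M Suc by (auto simp: mat_delete_def A_def replace_col_def)
      have "det (mat_delete A l 0) = prod_list (diag_mat (mat_delete A l 0))"
        by (rule det_lower_triangular[OF _ D]) (auto simp: ent M_def Mmat_def Suc)
      also have "diag_mat (mat_delete A l 0) = map (\<lambda>i. of_nat (Suc i)) [0..<l]"
        using D Suc by (auto simp: diag_mat_def ent M_def Mmat_def intro!: map_cong)
      finally show ?thesis using prod_list_diag_fact[of l] by simp
    qed
    finally have dM: "det M = c * ((-1)^l * of_nat (fact l))" using e1 by (simp add: A_def)
    have "Fk s (int k) = (-1)^k / of_nat (fact k) * det M"
    proof -
      have "k > 0" using Suc by simp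
      thus ?thesis by (simp add: Fk_def M_def)
    qed
    also have "\<dots> = - c / of_nat k"
    proof -
      have F: "(of_nat (fact k) :: complex) = of_nat k * of_nat (fact l)"
        using Suc by (simp only: fact_Suc of_nat_mult of_nat_id)
      have k0: "(of_nat k :: complex) \<noteq> 0" using Suc of_nat_eq_0_iff by blast
      have f0: "(of_nat (fact l) :: complex) \<noteq> 0" by simp
      have ee: "((-1::complex)^l) * (-1)^l = 1" by (simp flip: power_add)
      have pk: "(-1::complex)^k = - ((-1)^l)" using Suc by simp
      have "(-1)^k / of_nat (fact k) * det M
          = - ((-1)^l) / (of_nat k * of_nat (fact l)) * (c * ((-1)^l * of_nat (fact l)))"
        unfolding dM F pk by simp
      also have "\<dots> = - c / of_nat k * (((-1)^l * (-1)^l) * (of_nat (fact l) / of_nat (fact l)))"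
        by (simp add: field_simps)
      also have "\<dots> = - c / of_nat k" using f0 ee by simp
      finally show ?thesis .
    qed
    finally have FF: "Fk s (int k) = - c / of_nat k" .
    have k0: "(of_nat k :: complex) \<noteq> 0" using Suc of_nat_eq_0_iff by blast
    have "of_nat k * Fk s (int k) = - c" unfolding FF using k0 by simp
    thus ?thesis unfolding c_def .
  qed
qed


lemma sum_shift1: "(\<Sum>j\<in>{1..n}. f j) = (\<Sum>j<n. f (Suc j))"
  by (induction n) (auto simp: atLeastAtMostSuc_conv add.commute)

lemma cramer_F:
  fixes w :: "nat \<Rightarrow> complex"
  assumes w0: "w 0 = 1"
    and eqs: "\<And>i. i < \<mu> \<Longrightarrow> (\<Sum>j\<le>\<mu>. w j * Fk s (int \<nu> + 1 + int i - int j)) = 0"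
    and c: "1 \<le> c" "c \<le> \<mu>"
  shows "det (Fmat_i s \<nu> \<mu> c) = w c * det (Fmat s \<nu> \<mu>)"
proof -
  define A where "A = Fmat s \<nu> \<mu>"
  define x where "x = vec \<mu> (\<lambda>j. w (Suc j))"
  have A: "A \<in> carrier_mat \<mu> \<mu>" by (simp add: A_def Fmat_def)
  have x: "x \<in> carrier_vec \<mu>" by (simp add: x_def)
  have Ax: "A *\<^sub>v x = vec \<mu> (\<lambda>i. - Fk s (int \<nu> + int i + 1))"
  proof (rule eq_vecI)
    fix i assume "i < dim_vec (vec \<mu> (\<lambda>i. - Fk s (int \<nu> + int i + 1)))"
    hence i: "i < \<mu>" by simp
    have "(A *\<^sub>v x) $ i = (\<Sum>j<\<mu>. Fk s (int \<nu> + int i - int j) * w (Suc j))"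
      using i A x unfolding mult_mat_vec_def scalar_prod_def
      by (auto simp: A_def x_def Fmat_def lessThan_atLeast0 intro!: sum.cong)
    also have "\<dots> = (\<Sum>j\<in>{1..\<mu>}. w j * Fk s (int \<nu> + 1 + int i - int j))"
      unfolding sum_shift1 by (rule sum.cong) (auto simp: algebra_simps)
    also have "\<dots> = - Fk s (int \<nu> + int i + 1)"
    proof -
      have "(\<Sum>j\<le>\<mu>. w j * Fk s (int \<nu> + 1 + int i - int j))
          = w 0 * Fk s (int \<nu> + 1 + int i) + (\<Sum>j\<in>{1..\<mu>}. w j * Fk s (int \<nu> + 1 + int i - int j))"
        by (simp add: atMost_atLeast0 sum.atLeast_Suc_atMost)
      thus ?thesis using eqs[OF i] w0 by (simp add: algebra_simps eq_neg_iff_add_eq_0)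
    qed
    finally show "(A *\<^sub>v x) $ i = vec \<mu> (\<lambda>i. - Fk s (int \<nu> + int i + 1)) $ i" using i by simp
  qed (use A in auto)
  have "det (replace_col A (A *\<^sub>v x) (c - 1)) = x $ (c - 1) * det A"
    by (rule cramer_lemma_mat[OF A x]) (use c in auto)
  moreover have "replace_col A (A *\<^sub>v x) (c - 1) = Fmat_i s \<nu> \<mu> c"
    unfolding Ax using c by (auto simp: replace_col_def A_def Fmat_def Fmat_i_def intro!: eq_matI)
  ultimately show ?thesis using c by (simp add: x_def A_def)
qed



definition lprod :: "real list \<Rightarrow> real poly" where
  "lprod rs = prod_list (map (\<lambda>r. [:-r, 1:]) rs)"

lemma lprod_Cons: "lprod (r # rs) = [:-r,1:] * lprod rs"
  by (simp add: lprod_def)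

lemma lprod_Nil[simp]: "lprod [] = 1"
  by (simp add: lprod_def)

lemma poly_lprod: "poly (lprod rs) x = (\<Prod>r\<leftarrow>rs. x - r)"
  by (induction rs) (auto simp: lprod_def algebra_simps)

lemma poly_lprod_0: "poly (lprod rs) x = 0 \<longleftrightarrow> x \<in> set rs"
  by (induction rs) (auto simp: lprod_def)

lemma lprod_nz: "lprod rs \<noteq> 0"
  using poly_lprod_0[of rs "Max (insert 0 (set rs)) + 1"]
  by (metis Max_ge List.finite_set add_le_same_cancel1 finite_insert insertCI not_one_le_zero poly_0)

lemma order_lprod: "order x (lprod rs) = count_list rs x"
proof (induction rs)
  case Nil then show ?case by (simp add: lprod_def order_0I)
next
  case (Cons r rs)
  have "order x (lprod (r # rs)) = order x [:-r,1:] + order x (lprod rs)"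
    unfolding lprod_Cons by (rule order_mult) (metis lprod_nz lprod_Cons)
  moreover have "order x [:-r,1:] = (if x = r then 1 else 0)"
    using order_power_n_n[of x 1] by (auto intro: order_0I)
  ultimately show ?case using Cons by simp
qed

lemma lprod_incr_weak:
  assumes "\<forall>r\<in>set rs. r \<le> c" "c < x" "x < y"
  shows "0 < poly (lprod rs) x \<and> poly (lprod rs) x \<le> poly (lprod rs) y"
  using assms
proof (induction rs)
  case Nil then show ?case by simp
next
  case (Cons r rs)
  hence IH: "0 < poly (lprod rs) x" "poly (lprod rs) x \<le> poly (lprod rs) y" by auto
  have r: "0 < x - r" "x - r < y - r" using Cons by auto
  have "(x - r) * poly (lprod rs) x \<le> (y - r) * poly (lprod rs) y"
    using IH r by (intro mult_mono) auto
  moreover have "poly (lprod (r # rs)) z = (z - r) * poly (lprod rs) z" for z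
    by (simp add: poly_lprod)
  ultimately show ?case using IH r by simp
qed

lemma lprod_incr:
  assumes "\<forall>r\<in>set rs. r \<le> c" "c < x" "x < y" "rs \<noteq> []"
  shows "0 < poly (lprod rs) x \<and> poly (lprod rs) x < poly (lprod rs) y"
proof -
  obtain r rs' where rs: "rs = r # rs'" using assms(4) by (cases rs) auto
  have IH: "0 < poly (lprod rs') x" "poly (lprod rs') x \<le> poly (lprod rs') y"
    using lprod_incr_weak[of rs' c x y] assms rs by auto
  have r: "0 < x - r" "x - r < y - r" using assms rs by auto
  have "(x - r) * poly (lprod rs') x < (y - r) * poly (lprod rs') y"
    using IH r by (meson less_le_trans mult_strict_right_mono mult_left_mono less_imp_le)
  moreover have "poly (lprod rs) z = (z - r) * poly (lprod rs') z" for z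
    by (simp add: poly_lprod rs)
  ultimately show ?thesis using IH r by simp
qed

lemma lprod_monic: "lead_coeff (lprod rs) = 1"
  by (induction rs) (simp_all only: lprod_Cons lead_coeff_mult lprod_Nil, simp_all)

lemma degree_lprod: "degree (lprod rs) = length rs"
proof (induction rs)
  case (Cons r rs)
  have "degree ([:-r,1:] * lprod rs) = degree [:-r,1:] + degree (lprod rs)"
    by (rule degree_mult_eq) (auto simp: lprod_nz)
  thus ?case using Cons by (simp only: lprod_Cons) simp
qed simp

lemma lprod_count:
  assumes "finite A" "set rs \<subseteq> A"
  shows "lprod rs = (\<Prod>x\<in>A. [:-x,1:] ^ count_list rs x)"
  using assms(2)
proof (induction rs)
  case Nil then show ?case by (simp add: lprod_def)
next
  case (Cons r rs)
  have "(\<Prod>x\<in>A. [:-x,1:] ^ count_list (r # rs) x)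
      = (\<Prod>x\<in>A. [:-x,1:] ^ count_list rs x * (if x = r then [:-x,1:] else 1))"
    by (rule prod.cong) auto
  also have "\<dots> = (\<Prod>x\<in>A. [:-x,1:] ^ count_list rs x) * (\<Prod>x\<in>A. if x = r then [:-x,1:] else 1)"
    by (rule prod.distrib)
  also have "(\<Prod>x\<in>A. if x = r then [:-x,1:] else 1) = [:-r,1:]"
    using Cons(2) assms(1) by (simp add: prod.delta)
  finally show ?case using Cons by (simp add: lprod_Cons mult.commute)
qed

lemma perturb:
  fixes f g :: "real \<Rightarrow> real"
  assumes cf: "continuous_on {-1..1} f" and cg: "continuous_on {-1..1} g"
    and L0: "L > 0"
    and bnd: "\<And>x. x \<in> {-1..1} \<Longrightarrow> \<bar>f x\<bar> \<le> L"
    and ext: "\<And>x. x \<in> {-1..1} \<Longrightarrow> \<bar>f x\<bar> = L \<Longrightarrow> 0 < f x * g x"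
  shows "\<exists>\<epsilon>>0. \<forall>x\<in>{-1..1}. \<bar>f x - \<epsilon> * g x\<bar> < L"
proof -
  define K :: "real set" where "K = {-1..1}"
  define \<phi> where "\<phi> x = max (L^2 - (f x)^2) (f x * g x)" for x
  have cphi: "continuous_on K \<phi>" unfolding \<phi>_def K_def
    by (intro continuous_intros cf cg)
  obtain x0 where x0: "x0 \<in> K" "\<And>y. y \<in> K \<Longrightarrow> \<phi> x0 \<le> \<phi> y"
    using continuous_attains_inf[OF _ _ cphi] unfolding K_def by auto
  have pos: "\<phi> x > 0" if "x \<in> K" for x
  proof (cases "\<bar>f x\<bar> = L")
    case True then show ?thesis using ext[of x] that by (auto simp: \<phi>_def K_def)
  next
    case False
    hence "\<bar>f x\<bar> < L" using bnd[of x] that by (auto simp: K_def)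
    hence "\<bar>f x\<bar> * \<bar>f x\<bar> < L * L" by (intro mult_strict_mono) auto
    hence "(f x)^2 < L^2" by (simp add: power2_eq_square abs_mult_self_eq)
    then show ?thesis by (auto simp: \<phi>_def)
  qed
  define \<delta> where "\<delta> = \<phi> x0"
  have d0: "\<delta> > 0" using pos x0 by (simp add: \<delta>_def)
  define \<psi> where "\<psi> x = (g x)^2 + \<bar>f x * g x\<bar>" for x
  have cpsi: "continuous_on K \<psi>" unfolding \<psi>_def K_def
    by (intro continuous_intros cf cg)
  obtain x1 where x1: "x1 \<in> K" "\<And>y. y \<in> K \<Longrightarrow> \<psi> y \<le> \<psi> x1"
    using continuous_attains_sup[OF _ _ cpsi] unfolding K_def by auto
  define G where "G = \<psi> x1 + 1"
  have G0: "G > 0" unfolding G_def \<psi>_def by (smt (verit) abs_ge_zero zero_le_power2)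
  have Gb: "(g x)^2 \<le> G" "\<bar>f x * g x\<bar> \<le> G" if "x \<in> K" for x
    using x1(2)[OF that] unfolding G_def \<psi>_def by (smt (verit) abs_ge_zero zero_le_power2)+
  define \<epsilon> where "\<epsilon> = min (\<delta> / (4 * G)) 1"
  have e0: "\<epsilon> > 0" using d0 G0 by (simp add: \<epsilon>_def)
  have e1: "\<epsilon> \<le> 1" by (simp add: \<epsilon>_def)
  have eG: "\<epsilon> * G \<le> \<delta> / 4"
  proof -
    have "\<epsilon> \<le> \<delta> / (4 * G)" by (simp add: \<epsilon>_def)
    hence "\<epsilon> * G \<le> \<delta> / (4 * G) * G" using G0 by (intro mult_right_mono) auto
    thus ?thesis using G0 by simp
  qed
  have "\<bar>f x - \<epsilon> * g x\<bar> < L" if x: "x \<in> K" for x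
  proof -
    have g2: "\<epsilon>^2 * (g x)^2 \<le> \<epsilon> * G * \<epsilon>"
    proof -
      have "\<epsilon>^2 * (g x)^2 \<le> \<epsilon>^2 * G" using Gb(1)[OF x] by (intro mult_left_mono) auto
      thus ?thesis by (simp add: power2_eq_square algebra_simps)
    qed
    have g3: "\<epsilon> * G * \<epsilon> \<le> \<epsilon> * G" using e1 e0 G0 by (simp add: mult_left_le)
    have fg: "\<bar>f x * g x\<bar> \<le> G" using Gb(2)[OF x] .
    have key: "L^2 - (f x - \<epsilon> * g x)^2 = (L^2 - (f x)^2) + 2 * \<epsilon> * (f x * g x) - \<epsilon>^2 * (g x)^2"
      by (simp add: power2_eq_square algebra_simps)
    have "\<phi> x \<ge> \<delta>" using x0(2)[OF x] by (simp add: \<delta>_def)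
    hence "L^2 - (f x)^2 \<ge> \<delta> \<or> f x * g x \<ge> \<delta>" by (auto simp: \<phi>_def max_def split: if_splits)
    hence "L^2 - (f x - \<epsilon> * g x)^2 > 0"
    proof
      assume h: "L^2 - (f x)^2 \<ge> \<delta>"
      have "- (\<epsilon> * G) \<le> \<epsilon> * (f x * g x)"
        using fg e0 by (smt (verit) mult_left_mono abs_le_iff mult_minus_right)
      thus ?thesis unfolding key using h g2 g3 eG d0 by linarith
    next
      assume h: "f x * g x \<ge> \<delta>"
      have "\<bar>f x\<bar> * \<bar>f x\<bar> \<le> L * L" using bnd[of x] x by (intro mult_mono) (auto simp: K_def)
      hence "L^2 - (f x)^2 \<ge> 0" by (simp add: power2_eq_square)
      moreover have "\<epsilon> * \<delta> \<le> \<epsilon> * (f x * g x)" using h e0 by simp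
      moreover have "\<epsilon> * G * \<epsilon> \<le> \<delta> / 4 * \<epsilon>" using eG e0 by (intro mult_right_mono) auto
      moreover have "\<epsilon> * \<delta> > 0" using e0 d0 by simp
      moreover have "2 * \<epsilon> * (f x * g x) = 2 * (\<epsilon> * (f x * g x))" by simp
      moreover have "\<delta> / 4 * \<epsilon> = (\<epsilon> * \<delta>) / 4" by simp
      ultimately show ?thesis unfolding key using g2 by linarith
    qed
    hence "(f x - \<epsilon> * g x)^2 < L^2" by simp
    show ?thesis
    proof (rule ccontr)
      assume "\<not> \<bar>f x - \<epsilon> * g x\<bar> < L"
      hence "L * L \<le> \<bar>f x - \<epsilon> * g x\<bar> * \<bar>f x - \<epsilon> * g x\<bar>" using L0 by (intro mult_mono) auto
      thus False using \<open>(f x - \<epsilon> * g x)^2 < L^2\<close> by (simp add: power2_eq_square)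
    qed
  qed
  thus ?thesis using e0 unfolding K_def by blast
qed


lemma sum_order_le_degree_set:
  fixes p :: "real poly"
  assumes "p \<noteq> 0" "finite T"
  shows "(\<Sum>x\<in>T. order x p) \<le> degree p"
proof -
  have fin: "finite {x. poly p x = 0}" using poly_roots_finite[OF assms(1)] .
  have "(\<Sum>x\<in>T. order x p) = (\<Sum>x\<in>T \<inter> {x. poly p x = 0}. order x p)"
    by (rule sum.mono_neutral_right) (use assms in \<open>auto intro: order_0I simp: order_root\<close>)
  also have "\<dots> \<le> (\<Sum>x | poly p x = 0. order x p)"
    by (rule sum_mono2[OF fin]) auto
  also have "\<dots> \<le> degree p" by (rule sum_order_le_degree[OF assms(1)])
  finally show ?thesis .
qed

locale zs =
  fixes Zr :: "real poly" and n :: nat and L \<alpha> \<beta> :: real and rs1 rs2 :: "real list"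
  assumes n2: "n \<ge> 2" and degZ: "degree Zr = n" and monZ: "coeff Zr n = 1"
    and L0: "L > 0" and a1: "1 < \<alpha>" and ab: "\<alpha> < \<beta>"
    and Sx: "\<And>x. poly Zr x \<in> {-L..L} \<longleftrightarrow> x \<in> {-1..1} \<union> {\<alpha>..\<beta>}"
    and rs1: "Zr - [:L:] = lprod rs1" "set rs1 \<subseteq> {-1..1} \<union> {\<alpha>..\<beta>}"
    and rs2: "Zr + [:L:] = lprod rs2" "set rs2 \<subseteq> {-1..1} \<union> {\<alpha>..\<beta>}"
    and opt: "\<And>q. degree q \<le> n - 2 \<Longrightarrow> \<not> (\<forall>x\<in>{-1..1}. \<bar>poly Zr x - poly q x\<bar> < L)"
begin

abbreviation "SS \<equiv> {-1..1} \<union> {\<alpha>..\<beta>}"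

lemma root1: "poly Zr x = L \<longleftrightarrow> x \<in> set rs1"
proof -
  have "poly (Zr - [:L:]) x = poly Zr x - L" by simp
  thus ?thesis using rs1(1) poly_lprod_0[of rs1 x] by auto
qed

lemma root2: "poly Zr x = -L \<longleftrightarrow> x \<in> set rs2"
proof -
  have "poly (Zr + [:L:]) x = poly Zr x + L" by simp
  thus ?thesis using rs2(1) poly_lprod_0[of rs2 x] by auto
qed

lemma bound_right:
  assumes "a < b" "a \<in> SS" "\<And>x. a < x \<Longrightarrow> x \<le> b \<Longrightarrow> x \<notin> SS"
  shows "poly Zr a = L \<or> poly Zr a = -L"
proof (rule ccontr)
  assume ne: "\<not> ?thesis"
  have "poly Zr a \<in> {-L..L}" using Sx assms(2) by blast
  hence a: "-L < poly Zr a" "poly Zr a < L" using ne by auto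
  have "b \<notin> SS" using assms by auto
  hence "poly Zr b \<notin> {-L..L}" using Sx by blast
  hence "poly Zr b > L \<or> poly Zr b < -L" by auto
  thus False
  proof
    assume "poly Zr b > L"
    hence "poly (Zr - [:L:]) a < 0" "0 < poly (Zr - [:L:]) b" using a by auto
    then obtain x where "a < x" "x < b" "poly (Zr - [:L:]) x = 0" using poly_IVT_pos assms(1) by blast
    hence "poly Zr x \<in> {-L..L}" "x \<notin> SS" using L0 assms(3)[of x] by auto
    thus False using Sx by blast
  next
    assume "poly Zr b < -L"
    hence "0 < poly (Zr + [:L:]) a" "poly (Zr + [:L:]) b < 0" using a by auto
    then obtain x where "a < x" "x < b" "poly (Zr + [:L:]) x = 0" using poly_IVT_neg assms(1) by blast
    hence "poly Zr x \<in> {-L..L}" "x \<notin> SS" using L0 assms(3)[of x] by auto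
    thus False using Sx by blast
  qed
qed

lemma bound_left:
  assumes "a < b" "b \<in> SS" "\<And>x. a \<le> x \<Longrightarrow> x < b \<Longrightarrow> x \<notin> SS"
  shows "poly Zr b = L \<or> poly Zr b = -L"
proof (rule ccontr)
  assume ne: "\<not> ?thesis"
  have "poly Zr b \<in> {-L..L}" using Sx assms(2) by blast
  hence b: "-L < poly Zr b" "poly Zr b < L" using ne by auto
  have "a \<notin> SS" using assms by auto
  hence "poly Zr a \<notin> {-L..L}" using Sx by blast
  hence "poly Zr a > L \<or> poly Zr a < -L" by auto
  thus False
  proof
    assume "poly Zr a > L"
    hence "0 < poly (Zr - [:L:]) a" "poly (Zr - [:L:]) b < 0" using b by auto
    then obtain x where "a < x" "x < b" "poly (Zr - [:L:]) x = 0" using poly_IVT_neg assms(1) by blast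
    hence "poly Zr x \<in> {-L..L}" "x \<notin> SS" using L0 assms(3)[of x] by auto
    thus False using Sx by blast
  next
    assume "poly Zr a < -L"
    hence "poly (Zr + [:L:]) a < 0" "0 < poly (Zr + [:L:]) b" using b by auto
    then obtain x where "a < x" "x < b" "poly (Zr + [:L:]) x = 0" using poly_IVT_pos assms(1) by blast
    hence "poly Zr x \<in> {-L..L}" "x \<notin> SS" using L0 assms(3)[of x] by auto
    thus False using Sx by blast
  qed
qed

lemma bnd_m1: "poly Zr (-1) = L \<or> poly Zr (-1) = -L"
  by (rule bound_left[of "-2"]) (use a1 ab in auto)
lemma bnd_1: "poly Zr 1 = L \<or> poly Zr 1 = -L"
  by (rule bound_right[of _ "(1+\<alpha>)/2"]) (use a1 ab in auto)
lemma bnd_a: "poly Zr \<alpha> = L \<or> poly Zr \<alpha> = -L"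
  by (rule bound_left[of "(1+\<alpha>)/2"]) (use a1 ab in auto)
lemma bnd_b: "poly Zr \<beta> = L \<or> poly Zr \<beta> = -L"
  by (rule bound_right[of _ "\<beta>+1"]) (use a1 ab in auto)

lemma len_rs1: "length rs1 = n"
proof -
  have "degree (Zr + [:-L:]) = n" using degZ n2 by (subst degree_add_eq_left) auto
  moreover have "Zr - [:L:] = Zr + [:-L:]" by simp
  ultimately have "degree (Zr - [:L:]) = n" by metis
  thus ?thesis using rs1(1) degree_lprod by metis
qed

lemma len_rs2: "length rs2 = n"
proof -
  have "degree (Zr + [:L:]) = n" using degZ n2 by (subst degree_add_eq_left) auto
  thus ?thesis using rs2(1) degree_lprod by metis
qed

lemma rs_le: "r \<in> set rs1 \<or> r \<in> set rs2 \<Longrightarrow> \<not> 1 < r \<Longrightarrow> r \<le> 1"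
  by auto

lemma Aminus: "\<exists>r\<in>set rs2. 1 < r"
proof (rule ccontr)
  assume "\<not> ?thesis"
  hence le: "\<forall>r\<in>set rs2. r \<le> 1" by auto
  have "poly Zr \<alpha> \<noteq> -L" "poly Zr \<beta> \<noteq> -L" using le root2 a1 ab by force+
  hence "poly Zr \<alpha> = L" "poly Zr \<beta> = L" using bnd_a bnd_b by auto
  moreover have "poly (lprod rs2) \<alpha> < poly (lprod rs2) \<beta>"
    using lprod_incr[OF le a1 ab] \<open>poly Zr \<alpha> \<noteq> -L\<close> root2 len_rs2 n2 by (cases rs2) auto
  moreover have "poly (lprod rs2) x = poly Zr x + L" for x using rs2(1)[symmetric] by simp
  ultimately show False by simp
qed

lemma Aplus: "\<exists>r\<in>set rs1. 1 < r"
proof (rule ccontr)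
  assume "\<not> ?thesis"
  hence le: "\<forall>r\<in>set rs1. r \<le> 1" by auto
  have "poly Zr \<alpha> \<noteq> L" "poly Zr \<beta> \<noteq> L" using le root1 a1 ab by force+
  hence "poly Zr \<alpha> = -L" "poly Zr \<beta> = -L" using bnd_a bnd_b by auto
  moreover have "poly (lprod rs1) \<alpha> < poly (lprod rs1) \<beta>"
    using lprod_incr[OF le a1 ab] \<open>poly Zr \<alpha> \<noteq> L\<close> root1 len_rs1 n2 by (cases rs1) auto
  moreover have "poly (lprod rs1) x = poly Zr x - L" for x using rs1(1)[symmetric] by simp
  ultimately show False by simp
qed

lemma degm: "degree (Zr - [:c:]) = n"
proof -
  have "degree (Zr + [:-c:]) = n" using degZ n2 by (subst degree_add_eq_left) auto
  moreover have "Zr - [:c:] = Zr + [:-c:]" by simp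
  ultimately show ?thesis by metis
qed

lemma coeff_minus_const: "k \<noteq> 0 \<Longrightarrow> coeff (p - [:c:]) k = coeff p k"
  by (cases k) auto

lemma opt_contra:
  assumes c0: "c0 = L \<or> c0 = -L" and a: "1 < a" and b: "1 < b" and ab': "a \<noteq> b"
    and pa: "poly Zr a = c0" and pb: "poly Zr b = c0" and u: "1 < u" and pu: "poly Zr u = -c0"
  shows False
proof -
  have "poly (Zr - [:c0:]) a = 0" using pa by simp
  then obtain r1 where r1: "Zr - [:c0:] = [:-a,1:] * r1" using poly_eq_0_iff_dvd by (metis dvdE)
  have "poly ([:-a,1:] * r1) b = 0" using pb r1[symmetric] by simp
  hence "poly r1 b = 0" using ab' by simp
  then obtain r2 where r2: "r1 = [:-b,1:] * r2" using poly_eq_0_iff_dvd by (metis dvdE)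
  have "poly (Zr + [:c0:]) u = 0" using pu by simp
  then obtain r3 where r3: "Zr + [:c0:] = [:-u,1:] * r3" using poly_eq_0_iff_dvd by (metis dvdE)
  have n1: "n \<noteq> 0" using n2 by simp
  have dm: "degree (Zr - [:c0:]) = n" by (rule degm)
  have dp: "degree (Zr + [:c0:]) = n" using degZ n2 by (subst degree_add_eq_left) auto
  have lm: "lead_coeff (Zr - [:c0:]) = 1" using dm monZ n1 by (cases n) auto
  have lp: "lead_coeff (Zr + [:c0:]) = 1" using dp monZ n1 by (cases n) auto
  have r2nz: "r2 \<noteq> 0" using dm r1 r2 n2 by auto
  have r3nz: "r3 \<noteq> 0" using dp r3 n2 by auto
  have dr2: "degree r2 = n - 2" using dm r1 r2 r2nz by (simp add: degree_mult_eq del: mult_pCons_left mult_pCons_right)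
  have lr2: "lead_coeff r2 = 1" using lm r1 r2 by (simp add: lead_coeff_mult del: mult_pCons_left mult_pCons_right)
  have dr3: "degree r3 = n - 1" using dp r3 r3nz by (simp add: degree_mult_eq del: mult_pCons_left mult_pCons_right)
  have lr3: "lead_coeff r3 = 1" using lp r3 by (simp add: lead_coeff_mult del: mult_pCons_left mult_pCons_right)
  define q where "q = r2 * [:2,1:] - r3"
  have d2: "degree (r2 * [:2,1:]) = n - 1" using dr2 r2nz n2 by (simp add: degree_mult_eq del: mult_pCons_left mult_pCons_right)
  have l2: "lead_coeff (r2 * [:2,1:]) = 1" using lr2 by (simp add: lead_coeff_mult del: mult_pCons_left mult_pCons_right)
  have dq1: "degree q \<le> n - 1" unfolding q_def using d2 dr3 by (intro degree_diff_le) auto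
  have cq: "coeff q (n - 1) = 0" unfolding q_def using d2 dr3 l2 lr3 by simp
  have dq: "degree q \<le> n - 2"
  proof (rule ccontr)
    assume "\<not> ?thesis"
    hence "degree q = n - 1" using dq1 by simp
    moreover have "q \<noteq> 0" using \<open>\<not> degree q \<le> n - 2\<close> by auto
    ultimately show False using cq by (metis leading_coeff_0_iff)
  qed
  have ev: "poly Zr x - c0 = (x - a) * (x - b) * poly r2 x" "poly Zr x + c0 = (x - u) * poly r3 x" for x
    using arg_cong[OF r1, of "\<lambda>p. poly p x"] arg_cong[OF r3, of "\<lambda>p. poly p x"] r2
    by (auto simp: algebra_simps)
  have gq: "poly q x = poly r2 x * (x + 2) - poly r3 x" for x by (simp add: q_def algebra_simps)
  have c2: "c0 * c0 > 0" using c0 L0 by auto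
  have ext: "0 < poly Zr x * poly q x" if x: "x \<in> {-1..1}" "\<bar>poly Zr x\<bar> = L" for x
  proof -
    have xa: "x - a < 0" "x - b < 0" "x - u < 0" "x + 2 > 0" using x a b u by auto
    have "poly Zr x = c0 \<or> poly Zr x = - c0" using x(2) c0 by auto
    thus ?thesis
    proof
      assume h: "poly Zr x = c0"
      have "(x - a) * (x - b) * poly r2 x = 0" using ev(1)[of x] h by simp
      hence r2x: "poly r2 x = 0" using xa by simp
      have E: "(x - u) * poly r3 x = 2 * c0" using ev(2)[of x] h by simp
      have "(x - u) * (c0 * poly r3 x) = c0 * ((x - u) * poly r3 x)" by (simp only: mult_ac)
      also have "\<dots> = 2 * (c0 * c0)" unfolding E by simp
      finally have "(x - u) * (c0 * poly r3 x) = 2 * (c0 * c0)" .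
      hence "c0 * poly r3 x < 0" using c2 xa by (smt (verit) mult_nonneg_nonpos2 mult_nonpos_nonpos)
      thus ?thesis using h r2x by (simp add: gq)
    next
      assume h: "poly Zr x = - c0"
      have "(x - u) * poly r3 x = 0" using ev(2)[of x] h by simp
      hence r3x: "poly r3 x = 0" using xa by simp
      have E: "(x - a) * (x - b) * poly r2 x = - 2 * c0" using ev(1)[of x] h by simp
      have "((x - a) * (x - b)) * (- c0 * poly r2 x) = - c0 * ((x - a) * (x - b) * poly r2 x)"
        by (simp only: mult_ac)
      also have "\<dots> = 2 * (c0 * c0)" unfolding E by simp
      finally have "((x - a) * (x - b)) * (- c0 * poly r2 x) = 2 * (c0 * c0)" .
      moreover have "(x - a) * (x - b) > 0" using xa by (simp add: mult_neg_neg)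
      ultimately have "- c0 * poly r2 x > 0" using c2 by (smt (verit) mult_pos_neg mult_pos_pos zero_less_mult_iff)
      hence "(- c0 * poly r2 x) * (x + 2) > 0" using xa(4) by (rule mult_pos_pos)
      thus ?thesis using h r3x by (simp add: gq algebra_simps)
    qed
  qed
  have bnd: "\<bar>poly Zr x\<bar> \<le> L" if "x \<in> {-1..1}" for x using Sx[of x] that by auto
  obtain \<epsilon> where e: "\<epsilon> > 0" "\<forall>x\<in>{-1..1}. \<bar>poly Zr x - \<epsilon> * poly q x\<bar> < L"
  proof -
    have "continuous_on {-1..1} (poly Zr)" "continuous_on {-1..1} (poly q)"
      by (intro continuous_intros)+
    from perturb[OF this L0 bnd ext] show ?thesis using that by blast
  qed
  have "degree (smult \<epsilon> q) \<le> n - 2" using dq by simp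
  from opt[OF this] e show False by simp
qed

lemma val_ab: "poly Zr \<alpha> = -L \<and> poly Zr \<beta> = L"
proof -
  obtain u2 where u2: "u2 \<in> set rs2" "1 < u2" using Aminus by blast
  obtain u1 where u1: "u1 \<in> set rs1" "1 < u1" using Aplus by blast
  have n1: "\<not> (poly Zr \<alpha> = L \<and> poly Zr \<beta> = L)"
    using opt_contra[of L \<alpha> \<beta> u2] u2 root2 a1 ab by auto
  have n2': "\<not> (poly Zr \<alpha> = -L \<and> poly Zr \<beta> = -L)"
    using opt_contra[of "-L" \<alpha> \<beta> u1] u1 root1 a1 ab by auto
  have "poly Zr \<alpha> \<noteq> L"
  proof
    assume h: "poly Zr \<alpha> = L"
    hence hb: "poly Zr \<beta> = -L" using n1 bnd_b by auto
    have "\<forall>r\<in>set rs1. r \<le> \<alpha>"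
    proof
      fix r assume r: "r \<in> set rs1"
      show "r \<le> \<alpha>"
      proof (rule ccontr)
        assume "\<not> r \<le> \<alpha>"
        hence "1 < r" "r \<noteq> \<alpha>" using a1 by auto
        thus False using opt_contra[of L r \<alpha> \<beta>] r root1 h hb a1 ab by auto
      qed
    qed
    hence "0 < poly (lprod rs1) \<beta>" using lprod_incr_weak[of rs1 \<alpha> \<beta> "\<beta>+1"] ab by auto
    moreover have "poly (lprod rs1) \<beta> = poly Zr \<beta> - L" using rs1(1)[symmetric] by simp
    ultimately show False using hb L0 by simp
  qed
  hence "poly Zr \<alpha> = -L" using bnd_a by auto
  thus ?thesis using n2' bnd_b by auto
qed

lemma uniq1: "x \<in> set rs1 \<Longrightarrow> 1 < x \<Longrightarrow> x = \<beta>"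
  using opt_contra[of L x \<beta> \<alpha>] val_ab root1 a1 ab by force

lemma uniq2: "x \<in> set rs2 \<Longrightarrow> 1 < x \<Longrightarrow> x = \<alpha>"
  using opt_contra[of "-L" x \<alpha> \<beta>] val_ab root2 a1 ab by force

lemma val_1: "poly Zr 1 = -L"
proof (rule ccontr)
  assume "poly Zr 1 \<noteq> -L"
  hence h: "poly Zr 1 = L" using bnd_1 by auto
  have "0 < poly Zr 1" "poly Zr \<alpha> < 0" using h val_ab L0 by auto
  then obtain x where "1 < x" "x < \<alpha>" "poly Zr x = 0" using poly_IVT_neg a1 by blast
  moreover have "poly Zr x \<in> {-L..L}" using \<open>poly Zr x = 0\<close> L0 by simp
  ultimately show False using Sx[of x] ab by auto
qed

lemma fermat:
  assumes x: "x \<in> set rs1 \<union> set rs2" "-1 < x" "x < 1"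
  shows "poly (pderiv Zr) x = 0"
proof -
  define d where "d = min (x + 1) (1 - x)"
  have d0: "0 < d" using x by (simp add: d_def)
  have inI: "y \<in> {-1..1}" if "\<bar>x - y\<bar> < d" for y using that by (auto simp: d_def abs_if split: if_splits)
  have bnd: "\<bar>poly Zr y\<bar> \<le> L" if "\<bar>x - y\<bar> < d" for y using Sx[of y] inI[OF that] by auto
  show ?thesis
  proof (cases "x \<in> set rs1")
    case True
    hence "poly Zr x = L" using root1 by simp
    hence "\<forall>y. \<bar>x - y\<bar> < d \<longrightarrow> poly Zr y \<le> poly Zr x"
    proof (intro allI impI)
      fix y assume "\<bar>x - y\<bar> < d"
      from bnd[OF this] show "poly Zr y \<le> poly Zr x" using \<open>poly Zr x = L\<close> by linarith
    qed
    from DERIV_local_max[OF poly_DERIV d0 this] show ?thesis .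
  next
    case False
    hence "x \<in> set rs2" using x by auto
    hence "poly Zr x = -L" using root2 by simp
    hence "\<forall>y. \<bar>x - y\<bar> < d \<longrightarrow> poly Zr x \<le> poly Zr y"
    proof (intro allI impI)
      fix y assume "\<bar>x - y\<bar> < d"
      from bnd[OF this] show "poly Zr x \<le> poly Zr y" using \<open>poly Zr x = -L\<close> by linarith
    qed
    from DERIV_local_min[OF poly_DERIV d0 this] show ?thesis .
  qed
qed

lemma pderiv_nz: "pderiv Zr \<noteq> 0"
  using degZ n2 by (simp add: pderiv_eq_0_iff)

lemma ord_rs1: "x \<in> set rs1 \<Longrightarrow> order x (pderiv Zr) + 1 = count_list rs1 x"
proof -
  assume x: "x \<in> set rs1"
  have "Zr - [:L:] \<noteq> 0" using rs1(1) lprod_nz by metis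
  moreover have "poly (Zr - [:L:]) x = 0" using x root1[of x] by simp
  ultimately have "order x (Zr - [:L:]) = Suc (order x (pderiv (Zr - [:L:])))" by (rule order_pderiv)
  moreover have "pderiv (Zr - [:L:]) = pderiv Zr" by (simp add: pderiv_diff pderiv_pCons)
  moreover have "order x (Zr - [:L:]) = count_list rs1 x" using rs1(1) order_lprod by metis
  ultimately show ?thesis by simp
qed

lemma ord_rs2: "x \<in> set rs2 \<Longrightarrow> order x (pderiv Zr) + 1 = count_list rs2 x"
proof -
  assume x: "x \<in> set rs2"
  have "Zr + [:L:] \<noteq> 0" using rs2(1) lprod_nz by metis
  moreover have "poly (Zr + [:L:]) x = 0" using x root2[of x] by simp
  ultimately have "order x (Zr + [:L:]) = Suc (order x (pderiv (Zr + [:L:])))" by (rule order_pderiv)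
  moreover have "pderiv (Zr + [:L:]) = pderiv Zr" by (simp add: pderiv_add pderiv_pCons)
  moreover have "order x (Zr + [:L:]) = count_list rs2 x" using rs2(1) order_lprod by metis
  ultimately show ?thesis by simp
qed

lemma disj12: "x \<in> set rs1 \<Longrightarrow> x \<notin> set rs2"
  using root1 root2 L0 by force

lemma rolle_pt: "\<exists>\<xi>. 1 < \<xi> \<and> \<xi> < \<alpha> \<and> poly (pderiv Zr) \<xi> = 0"
proof -
  have "poly Zr 1 = poly Zr \<alpha>" using val_1 val_ab by simp
  moreover have "continuous_on {1..\<alpha>} (poly Zr)" by (intro continuous_intros)
  moreover have "\<And>x. 1 < x \<Longrightarrow> x < \<alpha> \<Longrightarrow> poly Zr differentiable (at x)"
    using poly_DERIV real_differentiable_def by blast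
  ultimately obtain z where "1 < z" "z < \<alpha>" "DERIV (poly Zr) z :> 0"
    using Rolle[OF a1] by blast
  moreover have "DERIV (poly Zr) z :> poly (pderiv Zr) z" by (rule poly_DERIV)
  ultimately show ?thesis using DERIV_unique by blast
qed

lemma mults:
  shows "count_list rs1 \<beta> = 1" "count_list rs2 \<alpha> = 1" "count_list rs2 1 = 1"
    "count_list rs1 (-1) + count_list rs2 (-1) = 1"
    "\<And>x. x \<in> (set rs1 \<union> set rs2) - {-1, 1, \<alpha>, \<beta>} \<Longrightarrow>
        count_list rs1 x + count_list rs2 x = 2 \<and> -1 < x \<and> x < 1"
proof -
  define E where "E = set rs1 \<union> set rs2"
  define ov where "ov x = count_list rs1 x + count_list rs2 x" for x
  define I where "I = E - {-1, 1, \<alpha>, \<beta>}"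
  have finE: "finite E" by (simp add: E_def)
  have Esub: "(-1 \<le> x \<and> x \<le> 1) \<or> x = \<alpha> \<or> x = \<beta>" if "x \<in> E" for x
  proof (cases "1 < x")
    case True then show ?thesis using that uniq1 uniq2 by (auto simp: E_def)
  next
    case False
    have "x \<in> {-1..1} \<union> {\<alpha>..\<beta>}" using that rs1(2) rs2(2) by (auto simp: E_def)
    then show ?thesis using False a1 by auto
  qed
  have m1E: "-1 \<in> E" using bnd_m1 root1 root2 by (auto simp: E_def)
  have r1: "1 \<in> set rs2" using val_1 root2 by simp
  have ra: "\<alpha> \<in> set rs2" using val_ab root2 by simp
  have rb: "\<beta> \<in> set rs1" using val_ab root1 by simp
  have ends: "{-1, 1, \<alpha>, \<beta>} \<subseteq> E" using m1E r1 ra rb by (auto simp: E_def)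
  have Iint: "-1 < x \<and> x < 1" if "x \<in> I" for x using that Esub[of x] by (auto simp: I_def)
  have ordE: "order x (pderiv Zr) + 1 = ov x" if "x \<in> E" for x
  proof (cases "x \<in> set rs1")
    case True
    hence "count_list rs2 x = 0" using disj12 by (simp add: count_list_0_iff)
    thus ?thesis using ord_rs1[OF True] by (simp add: ov_def)
  next
    case False
    hence x2: "x \<in> set rs2" using that by (auto simp: E_def)
    have "count_list rs1 x = 0" using False by (simp add: count_list_0_iff)
    thus ?thesis using ord_rs2[OF x2] by (simp add: ov_def)
  qed
  have oI: "2 \<le> ov x" if "x \<in> I" for x
  proof -
    have "x \<in> E" using that by (simp add: I_def)
    have "poly (pderiv Zr) x = 0" using fermat[of x] Iint[OF that] \<open>x \<in> E\<close> by (simp add: E_def)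
    hence "order x (pderiv Zr) \<noteq> 0" using pderiv_nz by (simp add: order_root)
    thus ?thesis using ordE[OF \<open>x \<in> E\<close>] by simp
  qed
  have oE: "1 \<le> ov x" if "x \<in> E" for x using ordE[OF that] by simp
  obtain \<xi> where xi: "1 < \<xi>" "\<xi> < \<alpha>" "poly (pderiv Zr) \<xi> = 0" using rolle_pt by blast
  have xiE: "\<xi> \<notin> E" using xi Esub ab by force
  have "(\<Sum>x\<in>insert \<xi> E. order x (pderiv Zr)) \<le> degree (pderiv Zr)"
    by (rule sum_order_le_degree_set[OF pderiv_nz]) (simp add: finE)
  hence SB: "order \<xi> (pderiv Zr) + (\<Sum>x\<in>E. order x (pderiv Zr)) \<le> n - 1"
    using finE xiE degZ by (simp add: degree_pderiv)
  have oxi: "order \<xi> (pderiv Zr) \<ge> 1" using xi(3) pderiv_nz by (simp add: order_root)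
  have S1: "(\<Sum>x\<in>E. count_list rs1 x) = n" using sum_count_set[of rs1 E] finE len_rs1 by (simp add: E_def)
  have S2: "(\<Sum>x\<in>E. count_list rs2 x) = n" using sum_count_set[of rs2 E] finE len_rs2 by (simp add: E_def)
  have SO: "(\<Sum>x\<in>E. ov x) = 2 * n" using S1 S2 by (simp add: ov_def sum.distrib)
  have SO2: "(\<Sum>x\<in>E. ov x) = (\<Sum>x\<in>E. order x (pderiv Zr)) + card E"
  proof -
    have "(\<Sum>x\<in>E. ov x) = (\<Sum>x\<in>E. order x (pderiv Zr) + 1)"
      using ordE by (intro sum.cong) auto
    also have "\<dots> = (\<Sum>x\<in>E. order x (pderiv Zr)) + card E" by (simp add: sum_Suc)
    finally show ?thesis .
  qed
  have dist: "card {-1, 1, \<alpha>, \<beta>} = (4::nat)" using a1 ab by auto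
  have EI: "E = I \<union> {-1, 1, \<alpha>, \<beta>}" using ends by (auto simp: I_def)
  have finI: "finite I" using finE by (simp add: I_def)
  have cE: "card E = card I + 4" unfolding EI using finI dist by (subst card_Un_disjoint) (auto simp: I_def)
  have SEI: "(\<Sum>x\<in>E. ov x) = (\<Sum>x\<in>I. ov x) + (ov (-1) + ov 1 + ov \<alpha> + ov \<beta>)"
    unfolding EI using finI a1 ab by (subst sum.union_disjoint) (auto simp: I_def)
  have SIlow: "2 * card I \<le> (\<Sum>x\<in>I. ov x)"
    using sum_mono[of I "\<lambda>_. 2" ov] oI by simp
  have e1: "1 \<le> ov (-1)" "1 \<le> ov 1" "1 \<le> ov \<alpha>" "1 \<le> ov \<beta>" using oE ends by auto
  have cI: "n - 2 \<le> card I" using SB oxi SO SO2 cE n2 by linarith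
  have ends1: "ov (-1) = 1" "ov 1 = 1" "ov \<alpha> = 1" "ov \<beta> = 1"
    using SO SEI SIlow cI e1 n2 by linarith+
  have SI: "(\<Sum>x\<in>I. ov x) = 2 * n - 4" using SO SEI ends1 by linarith
  have oI2: "ov x = 2" if "x \<in> I" for x
  proof -
    have "(\<Sum>y\<in>I. ov y) = ov x + (\<Sum>y\<in>I - {x}. ov y)" using that finI by (simp add: sum.remove)
    moreover have "2 * card (I - {x}) \<le> (\<Sum>y\<in>I - {x}. ov y)"
      using sum_mono[of "I - {x}" "\<lambda>_. 2" ov] oI by simp
    moreover have "card (I - {x}) = card I - 1" using that finI by simp
    moreover have "card I \<ge> 1" using that finI card_0_eq by fastforce
    ultimately show ?thesis using SI cI oI[OF that] by linarith
  qed
  have nb2: "count_list rs2 \<beta> = 0" using rb disj12 by (simp add: count_list_0_iff)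
  have na1: "count_list rs1 \<alpha> = 0" using ra disj12 by (auto simp: count_list_0_iff)
  have n11: "count_list rs1 1 = 0" using r1 disj12 by (auto simp: count_list_0_iff)
  show "count_list rs1 \<beta> = 1" using ends1(4) nb2 by (simp add: ov_def)
  show "count_list rs2 \<alpha> = 1" using ends1(3) na1 by (simp add: ov_def)
  show "count_list rs2 1 = 1" using ends1(2) n11 by (simp add: ov_def)
  show "count_list rs1 (-1) + count_list rs2 (-1) = 1" using ends1(1) by (simp add: ov_def)
  fix x assume "x \<in> (set rs1 \<union> set rs2) - {-1, 1, \<alpha>, \<beta>}"
  hence "x \<in> I" by (simp add: I_def E_def)
  thus "count_list rs1 x + count_list rs2 x = 2 \<and> -1 < x \<and> x < 1"
    using oI2 Iint by (simp add: ov_def)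
qed

lemma factor:
  "\<exists>P Pt e1 e2. e1 + e2 = (1::nat) \<and> Zr - [:L:] = [:-\<beta>,1:] * [:1,1:] ^ e1 * P ^ 2 \<and>
     Zr + [:L:] = [:-\<alpha>,1:] * [:-1,1:] * [:1,1:] ^ e2 * Pt ^ 2 \<and> lead_coeff P = 1 \<and> lead_coeff Pt = 1"
proof -
  define E where "E = set rs1 \<union> set rs2"
  define I where "I = E - {-1, 1, \<alpha>, \<beta>}"
  have finE: "finite E" by (simp add: E_def)
  have finI: "finite I" using finE by (simp add: I_def)
  have m1E: "-1 \<in> E" using bnd_m1 root1 root2 by (auto simp: E_def)
  have r1: "1 \<in> set rs2" using val_1 root2 by simp
  have ra: "\<alpha> \<in> set rs2" using val_ab root2 by simp
  have rb: "\<beta> \<in> set rs1" using val_ab root1 by simp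
  have EI: "E = insert (-1) (insert 1 (insert \<alpha> (insert \<beta> I)))"
    using m1E r1 ra rb by (auto simp: I_def E_def)
  have splitE: "(\<Prod>x\<in>E. f x) = f (-1) * f 1 * f \<alpha> * f \<beta> * (\<Prod>x\<in>I. f x)" for f :: "real \<Rightarrow> real poly"
    unfolding EI using finI a1 ab by (simp add: I_def mult.assoc)
  have evI: "count_list rs x = 2 * (count_list rs x div 2)" if "x \<in> I" "rs = rs1 \<or> rs = rs2" for x rs
  proof -
    have m: "count_list rs1 x + count_list rs2 x = 2" using mults(5)[of x] that by (simp add: I_def E_def)
    have "count_list rs1 x = 0 \<or> count_list rs2 x = 0"
      using disj12[of x] by (auto simp: count_list_0_iff)
    thus ?thesis using m that(2) by auto
  qed
  have sq: "(\<Prod>x\<in>I. [:-x,1:] ^ count_list rs x) = (\<Prod>x\<in>I. [:-x,1:] ^ (count_list rs x div 2)) ^ 2"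
    if "rs = rs1 \<or> rs = rs2" for rs
  proof -
    have "(\<Prod>x\<in>I. [:-x,1:] ^ count_list rs x) = (\<Prod>x\<in>I. ([:-x,1:] ^ (count_list rs x div 2)) ^ 2)"
      apply (rule prod.cong[OF refl])
      apply (subst evI[OF _ that], assumption)
      by (simp add: power_mult[symmetric] mult.commute)
    thus ?thesis by (simp add: prod_power_distrib)
  qed
  define P where "P = (\<Prod>x\<in>I. [:-x,1:] ^ (count_list rs1 x div 2))"
  define Pt where "Pt = (\<Prod>x\<in>I. [:-x,1:] ^ (count_list rs2 x div 2))"
  have c1a: "count_list rs1 \<alpha> = 0" using ra disj12 by (auto simp: count_list_0_iff)
  have c11: "count_list rs1 1 = 0" using r1 disj12 by (auto simp: count_list_0_iff)
  have c2b: "count_list rs2 \<beta> = 0" using rb disj12 by (auto simp: count_list_0_iff)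
  have "Zr - [:L:] = (\<Prod>x\<in>E. [:-x,1:] ^ count_list rs1 x)"
    using rs1(1) lprod_count[OF finE, of rs1] by (simp add: E_def)
  also have "\<dots> = [:-\<beta>,1:] * [:1,1:] ^ count_list rs1 (-1) * P ^ 2"
    unfolding splitE sq[of rs1, simplified] P_def using mults(1) c1a c11 by (simp add: mult_ac)
  finally have A: "Zr - [:L:] = [:-\<beta>,1:] * [:1,1:] ^ count_list rs1 (-1) * P ^ 2" .
  have "Zr + [:L:] = (\<Prod>x\<in>E. [:-x,1:] ^ count_list rs2 x)"
    using rs2(1) lprod_count[OF finE, of rs2] by (simp add: E_def)
  also have "\<dots> = [:-\<alpha>,1:] * [:-1,1:] * [:1,1:] ^ count_list rs2 (-1) * Pt ^ 2"
    unfolding splitE sq[of rs2, simplified] Pt_def using mults(2,3) c2b by (simp add: mult_ac del: mult_pCons_left mult_pCons_right)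
  finally have B: "Zr + [:L:] = [:-\<alpha>,1:] * [:-1,1:] * [:1,1:] ^ count_list rs2 (-1) * Pt ^ 2" .
  have lP: "lead_coeff P = 1" "lead_coeff Pt = 1"
    by (simp_all add: P_def Pt_def lead_coeff_prod lead_coeff_power)
  show ?thesis using A B lP mults(4) by blast
qed

end



abbreviation cr :: "real poly \<Rightarrow> complex poly" where "cr \<equiv> map_poly complex_of_real"

lemma coeff_cr: "coeff (cr p) i = complex_of_real (coeff p i)"
  by (simp add: coeff_map_poly)

lemma cr_add: "cr (p + q) = cr p + cr q" by (rule poly_eqI) (simp add: coeff_cr)
lemma cr_diff: "cr (p - q) = cr p - cr q" by (rule poly_eqI) (simp add: coeff_cr)
lemma cr_mult: "cr (p * q) = cr p * cr q"
  by (rule poly_eqI) (simp add: coeff_cr coeff_mult)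
lemma cr_power: "cr (p ^ k) = cr p ^ k"
  by (induction k) (simp_all add: cr_mult)
lemma cr_const: "cr [:c:] = [:complex_of_real c:]"
  by (rule poly_eqI) (simp add: coeff_cr coeff_pCons split: nat.split)
lemma cr_lin: "cr [:a, b:] = [:complex_of_real a, complex_of_real b:]"
  by (rule poly_eqI) (simp add: coeff_cr coeff_pCons split: nat.split)

lemma poly_cr: "poly (cr p) (complex_of_real x) = complex_of_real (poly p x)"
  by (induction p) (auto simp: map_poly_pCons)

lemma poly_map_Im: "poly (map_poly Im p) x = Im (poly p (complex_of_real x))"
  by (induction p) (auto simp: map_poly_pCons)

lemma degree_cr: "degree (cr p) = degree p"
  by (rule degree_map_poly) simp

lemma real_roots_split:
  fixes p :: "real poly"
  assumes "lead_coeff p = 1"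
    and "\<And>z. poly (cr p) z = 0 \<Longrightarrow> z \<in> complex_of_real ` S"
  shows "\<exists>rs. p = lprod rs \<and> set rs \<subseteq> S"
  using assms
proof (induction "degree p" arbitrary: p)
  case 0
  hence "p = 1" by (metis degree_eq_zeroE coeff_pCons_0 one_pCons)
  then show ?case by (intro exI[of _ "[]"]) simp
next
  case (Suc k)
  have "degree (cr p) > 0" using Suc(2) by (simp add: degree_cr)
  hence "\<not> constant (poly (cr p))" using constant_degree[of "cr p"] by simp
  then obtain z where z: "poly (cr p) z = 0" using fundamental_theorem_of_algebra by blast
  then obtain r where r: "z = complex_of_real r" "r \<in> S" using Suc(4) by blast
  have "poly p r = 0" using z r poly_cr[of p r] by simp
  then obtain q where q: "p = [:-r,1:] * q" using poly_eq_0_iff_dvd by (metis dvdE)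
  have qnz: "q \<noteq> 0" using q Suc(2) by auto
  have dq: "degree q = k" using q qnz Suc(2) by (simp add: degree_mult_eq del: mult_pCons_left)
  have lq: "lead_coeff q = 1" using q Suc(3) by (simp add: lead_coeff_mult del: mult_pCons_left)
  have "poly (cr q) w = 0 \<Longrightarrow> w \<in> complex_of_real ` S" for w
  proof -
    assume w: "poly (cr q) w = 0"
    have "cr p = cr [:-r,1:] * cr q" using q by (simp only: cr_mult)
    also have "cr [:-r,1:] = [:- complex_of_real r, 1:]" by (simp add: cr_lin)
    finally have "cr p = [:- complex_of_real r, 1:] * cr q" .
    hence "poly (cr p) w = 0" using w by simp
    thus ?thesis using Suc(4) by blast
  qed
  then obtain rs where rs: "q = lprod rs" "set rs \<subseteq> S" using Suc(1)[OF dq[symmetric] lq] by blast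
  show ?case using q rs r by (intro exI[of _ "r # rs"]) (simp add: lprod_Cons)
qed

lemma poly_zero_on_interval:
  fixes p :: "real poly"
  assumes "\<And>x. x \<in> {-1..1} \<Longrightarrow> poly p x = 0"
  shows "p = 0"
proof (rule ccontr)
  assume "p \<noteq> 0"
  hence "finite {x. poly p x = 0}" by (rule poly_roots_finite)
  moreover have "{-1..1::real} \<subseteq> {x. poly p x = 0}" using assms by auto
  ultimately have "finite {-1..1::real}" by (rule finite_subset[rotated])
  thus False using infinite_Icc[of "-1::real" 1] by simp
qed

lemma structure_main:
  fixes n :: nat and \<sigma> \<alpha> \<beta> L :: real and Z :: "complex poly"
  assumes n2: "n \<ge> 2" and zol: "is_zolotarev n \<sigma> Z" and Ldef: "L = sup_norm_I Z"
    and a1: "1 < \<alpha>" and ab: "\<alpha> < \<beta>"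
    and H: "{x::complex. poly Z x \<in> complex_of_real ` {-L..L}} =
         complex_of_real ` ({-1..1} \<union> {\<alpha>..\<beta>})"
  shows "\<exists>P Pt e1 e2. e1 + e2 = (1::nat) \<and>
     Z - [:complex_of_real L:] = [:- complex_of_real \<beta>, 1:] * [:1,1:] ^ e1 * P ^ 2 \<and>
     Z + [:complex_of_real L:] = [:- complex_of_real \<alpha>, 1:] * [:-1,1:] * [:1,1:] ^ e2 * Pt ^ 2 \<and>
     lead_coeff P = 1 \<and> lead_coeff Pt = 1"
proof -
  let ?S = "{-1..1} \<union> {\<alpha>..\<beta>}"
  have zc: "degree Z = n" "coeff Z n = 1" "coeff Z (n - 1) = - complex_of_real (real n * \<sigma>)"
    using zol by (auto simp: is_zolotarev_def zol_class_def)
  have Hx: "poly Z z \<in> complex_of_real ` {-L..L} \<longleftrightarrow> z \<in> complex_of_real ` ?S" for z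
    using H by blast
  have inI: "poly Z (complex_of_real x) \<in> complex_of_real ` {-L..L}" if "x \<in> {-1..1}" for x
    using Hx[of "complex_of_real x"] that by auto
  have "map_poly Im Z = 0"
  proof (rule poly_zero_on_interval)
    fix x :: real assume "x \<in> {-1..1}"
    then obtain y where "poly Z (complex_of_real x) = complex_of_real y" using inI by blast
    thus "poly (map_poly Im Z) x = 0" by (simp add: poly_map_Im)
  qed
  hence imz: "Im (coeff Z i) = 0" for i by (metis coeff_0 coeff_map_poly zero_complex.sel(2))
  define Zr where "Zr = map_poly Re Z"
  have ZZ: "Z = cr Zr"
    by (rule poly_eqI) (simp add: Zr_def coeff_cr coeff_map_poly complex_eq_iff imz)
  have pZ: "poly Z (complex_of_real x) = complex_of_real (poly Zr x)" for x
    by (simp add: ZZ poly_cr)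
  have degZr: "degree Zr = n" using zc(1) by (simp add: ZZ degree_cr)
  have monZr: "coeff Zr n = 1" using zc(2) by (simp add: ZZ coeff_cr)
  have Sx: "poly Zr x \<in> {-L..L} \<longleftrightarrow> x \<in> ?S" for x
    using Hx[of "complex_of_real x"] by (auto simp: pZ)
  have L0: "L > 0"
  proof (rule ccontr)
    assume "\<not> L > 0"
    hence "poly Zr x = 0" if "x \<in> {-1..1}" for x using Sx[of x] that by auto
    hence "Zr = 0" by (rule poly_zero_on_interval)
    thus False using degZr n2 by simp
  qed
  have lc1: "lead_coeff (Zr - [:L:]) = 1" "lead_coeff (Zr + [:L:]) = 1"
  proof -
    have d1: "degree (Zr + [:-L:]) = n" using degZr n2 by (subst degree_add_eq_left) auto
    have e: "Zr - [:L:] = Zr + [:-L:]" by simp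
    have d2: "degree (Zr + [:L:]) = n" using degZr n2 by (subst degree_add_eq_left) auto
    show "lead_coeff (Zr - [:L:]) = 1" unfolding e d1 using monZr n2 by (cases n) auto
    show "lead_coeff (Zr + [:L:]) = 1" unfolding d2 using monZr n2 by (cases n) auto
  qed
  obtain rs1 where rs1: "Zr - [:L:] = lprod rs1" "set rs1 \<subseteq> ?S"
  proof -
    have "\<exists>rs. Zr - [:L:] = lprod rs \<and> set rs \<subseteq> ?S"
    proof (rule real_roots_split[OF lc1(1)])
      fix z assume "poly (cr (Zr - [:L:])) z = 0"
      hence "poly Z z = complex_of_real L" by (simp add: ZZ cr_diff cr_const)
      hence "poly Z z \<in> complex_of_real ` {-L..L}" using L0 by auto
      thus "z \<in> complex_of_real ` ?S" using Hx by blast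
    qed
    thus ?thesis using that by blast
  qed
  obtain rs2 where rs2: "Zr + [:L:] = lprod rs2" "set rs2 \<subseteq> ?S"
  proof -
    have "\<exists>rs. Zr + [:L:] = lprod rs \<and> set rs \<subseteq> ?S"
    proof (rule real_roots_split[OF lc1(2)])
      fix z assume "poly (cr (Zr + [:L:])) z = 0"
      hence "poly Z z = - complex_of_real L" by (simp add: ZZ cr_add cr_const eq_neg_iff_add_eq_0)
      hence "poly Z z = complex_of_real (- L)" by simp
      hence "poly Z z \<in> complex_of_real ` {-L..L}" using L0 by (auto intro!: imageI)
      thus "z \<in> complex_of_real ` ?S" using Hx by blast
    qed
    thus ?thesis using that by blast
  qed
  have opt: "\<not> (\<forall>x\<in>{-1..1}. \<bar>poly Zr x - poly q x\<bar> < L)" if dq: "degree q \<le> n - 2" for q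
  proof
    assume sm: "\<forall>x\<in>{-1..1}. \<bar>poly Zr x - poly q x\<bar> < L"
    define Pq where "Pq = cr (Zr - q)"
    have dq': "degree (-q) < degree Zr" using dq degZr n2 by simp
    have dd: "degree (Zr - q) = n" using degree_add_eq_left[OF dq'] degZr by simp
    have cq: "coeff q n = 0" "coeff q (n - 1) = 0" using dq n2 by (auto intro: coeff_eq_0)
    have "Pq \<in> zol_class n \<sigma>"
      using dd cq zc monZr unfolding zol_class_def Pq_def
      by (simp add: degree_cr coeff_cr ZZ)
    hence le: "sup_norm_I Z \<le> sup_norm_I Pq" using zol by (auto simp: is_zolotarev_def)
    define g where "g x = \<bar>poly (Zr - q) x\<bar>" for x
    have cg: "continuous_on {-1..1} g" unfolding g_def by (intro continuous_intros)
    obtain x0 where x0: "x0 \<in> {-1..1}" "\<And>y. y \<in> {-1..1} \<Longrightarrow> g y \<le> g x0"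
      using continuous_attains_sup[OF _ _ cg] by auto
    have eqg: "(\<lambda>x::real. cmod (poly Pq (complex_of_real x))) = g"
      by (rule ext) (simp add: Pq_def g_def poly_cr del: of_real_diff)
    have "sup_norm_I Pq = Sup (g ` {-1..1})" unfolding sup_norm_I_def eqg by (rule refl)
    also have "\<dots> = g x0" using x0 by (intro cSup_eq_maximum) auto
    also have "\<dots> < L" using sm x0(1) by (simp add: g_def)
    finally show False using le Ldef by simp
  qed
  interpret zs Zr n L \<alpha> \<beta> rs1 rs2
    by (unfold_locales) (use n2 degZr monZr L0 a1 ab Sx rs1 rs2 opt in auto)
  obtain P Pt e1 e2 where f: "e1 + e2 = (1::nat)" "Zr - [:L:] = [:-\<beta>,1:] * [:1,1:] ^ e1 * P ^ 2"
    "Zr + [:L:] = [:-\<alpha>,1:] * [:-1,1:] * [:1,1:] ^ e2 * Pt ^ 2" "lead_coeff P = 1" "lead_coeff Pt = 1"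
    using factor by blast
  have A: "Z - [:complex_of_real L:] = [:- complex_of_real \<beta>, 1:] * [:1,1:] ^ e1 * cr P ^ 2"
  proof -
    have "Z - [:complex_of_real L:] = cr (Zr - [:L:])" by (simp add: ZZ cr_diff cr_const)
    also have "\<dots> = cr [:-\<beta>,1:] * cr [:1,1:] ^ e1 * cr P ^ 2" unfolding f(2) by (simp only: cr_mult cr_power)
    finally show ?thesis by (simp add: cr_lin)
  qed
  have B: "Z + [:complex_of_real L:] = [:- complex_of_real \<alpha>, 1:] * [:-1,1:] * [:1,1:] ^ e2 * cr Pt ^ 2"
  proof -
    have "Z + [:complex_of_real L:] = cr (Zr + [:L:])" by (simp add: ZZ cr_add cr_const)
    also have "\<dots> = cr [:-\<alpha>,1:] * cr [:-1,1:] * cr [:1,1:] ^ e2 * cr Pt ^ 2" unfolding f(3) by (simp only: cr_mult cr_power)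
    finally show ?thesis by (simp add: cr_lin)
  qed
  have "lead_coeff (cr P) = 1" "lead_coeff (cr Pt) = 1" using f(4,5) by (simp_all add: degree_cr coeff_cr)
  thus ?thesis using A B f(1) by blast
qed


no_notation vec_index (infixl \<open>$\<close> 100)
notation fps_nth (infixl \<open>$\<close> 75)

definition Fps :: "(nat \<Rightarrow> complex) \<Rightarrow> complex fps" where
  "Fps s = Abs_fps (\<lambda>k. Fk s (int k))"

lemma Fps_0[simp]: "Fps s $ 0 = 1" by (simp add: Fps_def Fk_def)


lemma Fps_deriv: "fps_deriv (Fps s) = - (Abs_fps (\<lambda>k. s (Suc k)) * Fps s)"
proof (rule fps_ext)
  fix k
  have "fps_deriv (Fps s) $ k = of_nat (Suc k) * Fk s (int (Suc k))"
    by (simp add: Fps_def)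
  also have "\<dots> = - (\<Sum>j<Suc k. s (Suc k - j) * Fk s (int j))" by (rule newton_rec)
  also have "(\<Sum>j<Suc k. s (Suc k - j) * Fk s (int j)) = (\<Sum>i=0..k. s (Suc i) * Fk s (int (k - i)))"
    apply (subst lessThan_Suc_atMost)
    apply (subst atLeast0AtMost[symmetric])
    apply (subst sum.atLeastAtMost_rev[of _ 0 k, simplified])
    by (auto intro!: sum.cong simp: Suc_diff_le)
  finally show "fps_deriv (Fps s) $ k = (- (Abs_fps (\<lambda>k. s (Suc k)) * Fps s)) $ k"
    by (simp add: fps_mult_nth Fps_def)
qed

definition geo :: "complex \<Rightarrow> complex fps" where "geo a = Abs_fps (\<lambda>k. a ^ k)"

definition lin :: "complex \<Rightarrow> complex fps" where "lin a = 1 - fps_const a * fps_X"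

lemma geo_lin: "geo a * lin a = 1"
proof (rule fps_ext)
  fix n
  show "(geo a * lin a) $ n = (1::complex fps) $ n"
  proof (cases n)
    case 0 then show ?thesis by (simp add: geo_def lin_def)
  next
    case (Suc m)
    have "(geo a * lin a) $ n = (geo a * 1) $ n - (geo a * (fps_const a * fps_X)) $ n"
      by (simp add: lin_def algebra_simps)
    also have "\<dots> = 0" using Suc by (simp add: geo_def mult.assoc[symmetric])
    finally show ?thesis using Suc by simp
  qed
qed

lemma lin_deriv[simp]: "fps_deriv (lin a) = - fps_const a" by (simp add: lin_def)

definition PL :: "complex list \<Rightarrow> complex fps" where "PL A = (\<Prod>a\<leftarrow>A. lin a)"
definition GL :: "complex list \<Rightarrow> complex fps" where "GL A = (\<Sum>a\<leftarrow>A. fps_const a * geo a)"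

lemma fps_const_neg_cancel: "fps_const a * Y + fps_const (-a) * Y = (0::complex fps)"
  by (simp add: distrib_right[symmetric])

lemma GL_PL: "GL A * PL A = - fps_deriv (PL A)"
proof (induction A)
  case Nil then show ?case by (simp add: GL_def PL_def)
next
  case (Cons a A)
  have "GL (a # A) * PL (a # A) = fps_const a * (geo a * lin a) * PL A + lin a * (GL A * PL A)"
    by (simp add: GL_def PL_def algebra_simps)
  also have "\<dots> = fps_const a * PL A - lin a * fps_deriv (PL A)"
    using Cons by (simp add: geo_lin)
  also have "\<dots> = - fps_deriv (PL (a # A))"
    apply (simp add: PL_def algebra_simps) by (rule fps_const_neg_cancel)
  finally show ?case .
qed

lemma PL_0[simp]: "PL A $ 0 = 1"
  by (induction A) (simp_all add: PL_def lin_def)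

lemma ode_unique:
  fixes P U :: "complex fps"
  assumes "P $ 0 = 1" "U $ 0 = 1" "P * fps_deriv U = fps_deriv P * U"
  shows "U = P"
proof -
  define V where "V = U - P"
  have V0: "V $ 0 = 0" using assms by (simp add: V_def)
  have E: "P * fps_deriv V = fps_deriv P * V" using assms(3) by (simp add: V_def algebra_simps)
  have "\<forall>j\<le>k. V $ j = 0" for k
  proof (induction k)
    case 0 then show ?case using V0 by simp
  next
    case (Suc k)
    have "(P * fps_deriv V) $ k = (fps_deriv P * V) $ k" using E by simp
    also have "\<dots> = 0" unfolding fps_mult_nth using Suc by (auto intro!: sum.neutral)
    also have "(P * fps_deriv V) $ k = (\<Sum>i\<in>{0}. P $ i * fps_deriv V $ (k - i))"
      unfolding fps_mult_nth
      apply (rule sum.mono_neutral_right) using Suc by auto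
    finally have "of_nat (Suc k) * V $ Suc k = 0" using assms(1) by simp
    hence "V $ Suc k = 0" by (metis mult_eq_0_iff of_nat_eq_0_iff nat.distinct(1))
    then show ?case using Suc le_Suc_eq by auto
  qed
  hence "V = 0" by (intro fps_ext) auto
  thus ?thesis by (simp add: V_def)
qed

lemma Fps_sq:
  fixes A B :: "complex list"
  assumes s: "\<And>k. s k = ((\<Sum>a\<leftarrow>A. a ^ k) - (\<Sum>b\<leftarrow>B. b ^ k)) / 2"
  shows "Fps s ^ 2 * PL B = PL A"
proof -
  define F where "F = Fps s"
  define S where "S = Abs_fps (\<lambda>k. s (Suc k))"
  have S2: "2 * S = GL A - GL B"
  proof (rule fps_ext)
    fix n
    have gl: "GL C $ n = (\<Sum>a\<leftarrow>C. a ^ Suc n)" for C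
      by (induction C) (simp_all add: GL_def geo_def)
    show "(2 * S) $ n = (GL A - GL B) $ n"
      by (simp add: S_def s gl numeral_fps_const)
  qed
  have dF: "fps_deriv F = - (S * F)" unfolding F_def S_def by (rule Fps_deriv)
  define U where "U = F ^ 2 * PL B"
  have dU: "fps_deriv U = F ^ 2 * (fps_deriv (PL B) - 2 * S * PL B)"
    by (simp add: U_def dF power2_eq_square algebra_simps numeral_fps_const)
  have "PL A * fps_deriv U = F ^ 2 * (PL A * fps_deriv (PL B) - (2 * S) * PL A * PL B)"
    unfolding dU by (simp add: algebra_simps)
  also have "(2 * S) * PL A * PL B = (GL A * PL A) * PL B - PL A * (GL B * PL B)"
    unfolding S2 by (simp only: left_diff_distrib mult.assoc mult.left_commute)
  also have "\<dots> = - fps_deriv (PL A) * PL B + fps_deriv (PL B) * PL A"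
    unfolding GL_PL by simp
  finally have "PL A * fps_deriv U = fps_deriv (PL A) * U"
    by (simp add: U_def algebra_simps)
  moreover have "U $ 0 = 1" unfolding U_def F_def power2_eq_square fps_mult_nth_0 PL_0 Fps_0 by simp
  ultimately have "U = PL A" using ode_unique[of "PL A" U] PL_0[of A] by blast
  thus ?thesis unfolding U_def F_def .
qed




definition revp :: "nat \<Rightarrow> complex poly \<Rightarrow> complex fps" where
  "revp N p = Abs_fps (\<lambda>k. if k \<le> N then coeff p (N - k) else 0)"

lemma revp_nth: "revp N p $ k = (if k \<le> N then coeff p (N - k) else 0)"
  by (simp add: revp_def)

lemma revp_0[simp]: "revp N 0 = 0"
  by (rule fps_ext) (simp add: revp_nth)

lemma revp_add: "revp N (p + q) = revp N p + revp N q"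
  by (rule fps_ext) (simp add: revp_nth)
lemma revp_diff: "revp N (p - q) = revp N p - revp N q"
  by (rule fps_ext) (simp add: revp_nth)
lemma revp_smult: "revp N (smult c p) = fps_const c * revp N p"
  by (rule fps_ext) (simp add: revp_nth)

lemma revp_alt:
  assumes "degree p \<le> N"
  shows "revp N p = fps_of_poly (reflect_poly p) * fps_X ^ (N - degree p)"
proof (rule fps_ext)
  fix k
  show "revp N p $ k = (fps_of_poly (reflect_poly p) * fps_X ^ (N - degree p)) $ k"
    using assms by (auto simp: revp_nth fps_X_power_mult_right_nth coeff_reflect_poly coeff_eq_0)
qed

lemma revp_mult:
  assumes "degree p \<le> N" "degree q \<le> M"
  shows "revp (N + M) (p * q) = revp N p * revp M q"
proof (cases "p = 0 \<or> q = 0")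
  case True then show ?thesis by auto
next
  case False
  hence d: "degree (p * q) = degree p + degree q" by (simp add: degree_mult_eq)
  have dpq: "degree (p * q) \<le> N + M" using d assms by simp
  have e: "N + M - degree (p * q) = (N - degree p) + (M - degree q)" using assms d by simp
  have "revp (N + M) (p * q) = fps_of_poly (reflect_poly p) * fps_of_poly (reflect_poly q) * (fps_X ^ (N - degree p) * fps_X ^ (M - degree q))"
    by (simp only: revp_alt[OF dpq] e power_add reflect_poly_mult fps_of_poly_mult)
  also have "\<dots> = (fps_of_poly (reflect_poly p) * fps_X ^ (N - degree p)) * (fps_of_poly (reflect_poly q) * fps_X ^ (M - degree q))"
    by (simp only: ac_simps)
  finally show ?thesis using assms by (simp only: revp_alt)
qed

lemma revp_lin: "revp 1 [:-a, 1:] = 1 - fps_const a * fps_X"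
  by (rule fps_ext) (auto simp: revp_nth numeral_2_eq_2 le_Suc_eq)

lemma revp_const: "revp N [:c:] = fps_const c * fps_X ^ N"
  by (rule fps_ext) (auto simp: revp_nth fps_X_power_mult_right_nth coeff_pCons split: nat.split)

lemma revp_high: "degree p \<le> d \<Longrightarrow> d \<le> N \<Longrightarrow> k < N - d \<Longrightarrow> revp N p $ k = 0"
  by (auto simp: revp_nth coeff_eq_0)

lemma revp_low: "degree p \<le> N \<Longrightarrow> N < k \<Longrightarrow> revp N p $ k = 0"
  by (auto simp: revp_nth)

lemma revp_monic0: "coeff p N = 1 \<Longrightarrow> revp N p $ 0 = 1"
  by (simp add: revp_nth)

lemma fps_cancel_low:
  fixes E G :: "complex fps"
  assumes "E $ 0 \<noteq> 0" "\<And>k. k < N \<Longrightarrow> (E * G) $ k = 0"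
  shows "k < N \<Longrightarrow> G $ k = 0"
proof (induction k rule: less_induct)
  case (less k)
  have "(E * G) $ k = (\<Sum>i\<in>{0}. E $ i * G $ (k - i))"
    unfolding fps_mult_nth
    apply (rule sum.mono_neutral_right) using less by auto
  hence "E $ 0 * G $ k = 0" using assms(2)[OF less(2)] by simp
  thus ?case using assms(1) by simp
qed

lemma pade_core:
  fixes A H B D C :: "complex fps"
  assumes eq: "D * (A * H - B) * (A * H + B) = fps_X ^ N * C"
    and nz: "D $ 0 * (A $ 0 * H $ 0 + B $ 0) \<noteq> 0"
  shows "k < N \<Longrightarrow> (A * H) $ k = B $ k"
proof -
  assume k: "k < N"
  have "(D * (A * H + B) * (A * H - B)) $ k = 0" if "k < N" for k
    using eq that by (simp add: fps_X_power_mult_nth fps_X_power_mult_right_nth algebra_simps)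
  hence "(A * H - B) $ k = 0"
    by (rule fps_cancel_low[of _ N, rotated]) (use nz k in auto)
  thus ?thesis by simp
qed

lemma pade_to_eqs:
  fixes A :: "complex fps"
  assumes hi: "\<And>j. \<mu> < j \<Longrightarrow> A $ j = 0"
    and z: "\<And>k. \<nu> < k \<Longrightarrow> k \<le> \<nu> + \<mu> \<Longrightarrow> (A * Fps s) $ k = 0"
    and i: "i < \<mu>"
  shows "(\<Sum>j\<le>\<mu>. A $ j * Fk s (int \<nu> + 1 + int i - int j)) = 0"
proof -
  define k where "k = \<nu> + 1 + i"
  have ik: "int \<nu> + 1 + int i = int k" by (simp add: k_def)
  have "(\<Sum>j\<le>\<mu>. A $ j * Fk s (int \<nu> + 1 + int i - int j)) = (\<Sum>j\<in>{..\<mu>} \<inter> {0..k}. A $ j * Fk s (int k - int j))"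
    unfolding ik apply (rule sum.mono_neutral_right) by (auto simp: Fk_def)
  also have "\<dots> = (\<Sum>j\<in>{0..k}. A $ j * Fk s (int (k - j)))"
    apply (rule sum.mono_neutral_cong_left) using hi by (auto simp: of_nat_diff)
  also have "\<dots> = (A * Fps s) $ k" by (simp add: fps_mult_nth Fps_def)
  also have "\<dots> = 0" using z i by (simp add: k_def)
  finally show ?thesis .
qed




lemma revp_lin_mult: "degree p \<le> N \<Longrightarrow> revp (Suc N) ([:-a,1:] * p) = lin a * revp N p"
proof -
  assume d: "degree p \<le> N"
  have "revp (1 + N) ([:-a,1:] * p) = revp 1 [:-a,1:] * revp N p" by (rule revp_mult) (use d in auto)
  moreover have "revp 1 [:-a,1:] = lin a" unfolding lin_def by (rule revp_lin)
  ultimately show ?thesis by simp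
qed

lemma revp_lin_mult1: "degree p \<le> N \<Longrightarrow> revp (Suc N) ([:1,1:] * p) = lin (-1) * revp N p"
  using revp_lin_mult[of p N "-1"] by simp

lemma revp_one: "revp N 1 = fps_X ^ N"
  using revp_const[of N 1] by (simp add: one_pCons[symmetric])

lemma revp_sq: "degree p \<le> N \<Longrightarrow> revp (N + N) (p * p) = revp N p * revp N p"
  by (rule revp_mult)

lemma lin_nth[simp]: "lin a $ 0 = 1" "lin a $ 1 = - a" "lin a $ Suc 0 = - a"
  by (simp_all add: lin_def)

lemma nth1_mult: "(f :: complex fps) $ 0 = 1 \<Longrightarrow> g $ 0 = 1 \<Longrightarrow> (f * g) $ 1 = f $ 1 + g $ 1"
  by (simp add: fps_mult_nth_1)

lemma final_eval:
  fixes W :: "complex poly"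
  assumes dW: "degree W = \<mu>" and mW: "coeff W \<mu> = 1" and rW: "poly W x0 = 0"
    and z: "\<And>k. \<nu> < k \<Longrightarrow> k \<le> \<nu> + \<mu> \<Longrightarrow> (revp \<mu> W * Fps s) $ k = 0"
  shows "x0 ^ \<mu> * detF s \<nu> \<mu> + (\<Sum>i=1..\<mu>. x0 ^ (\<mu> - i) * detFi s \<nu> \<mu> i) = 0"
proof -
  have mu: "\<mu> \<noteq> 0"
  proof
    assume "\<mu> = 0"
    hence "W = [:1:]" using dW mW by (metis degree_eq_zeroE coeff_pCons_0)
    thus False using rW by simp
  qed
  define w where "w j = revp \<mu> W $ j" for j
  have w0: "w 0 = 1" using mW by (simp add: w_def revp_nth)
  have hi: "\<And>j. \<mu> < j \<Longrightarrow> revp \<mu> W $ j = 0" by (simp add: revp_nth)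
  have eqs: "\<And>i. i < \<mu> \<Longrightarrow> (\<Sum>j\<le>\<mu>. w j * Fk s (int \<nu> + 1 + int i - int j)) = 0"
    unfolding w_def by (rule pade_to_eqs[OF hi z])
  have dF: "detFi s \<nu> \<mu> i = w i * detF s \<nu> \<mu>" if "1 \<le> i" "i \<le> \<mu>" for i
    using cramer_F[OF w0 eqs that] mu by (simp add: detFi_def detF_def)
  have "x0 ^ \<mu> * detF s \<nu> \<mu> + (\<Sum>i=1..\<mu>. x0 ^ (\<mu> - i) * detFi s \<nu> \<mu> i)
      = detF s \<nu> \<mu> * (\<Sum>i\<le>\<mu>. w i * x0 ^ (\<mu> - i))"
  proof -
    have "(\<Sum>i\<le>\<mu>. w i * x0 ^ (\<mu> - i)) = w 0 * x0 ^ \<mu> + (\<Sum>i=1..\<mu>. w i * x0 ^ (\<mu> - i))"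
      by (simp add: atMost_atLeast0 sum.atLeast_Suc_atMost)
    moreover have "(\<Sum>i=1..\<mu>. x0 ^ (\<mu> - i) * detFi s \<nu> \<mu> i) = detF s \<nu> \<mu> * (\<Sum>i=1..\<mu>. w i * x0 ^ (\<mu> - i))"
      by (simp add: sum_distrib_left dF algebra_simps)
    ultimately show ?thesis using w0 by (simp add: algebra_simps)
  qed
  also have "(\<Sum>i\<le>\<mu>. w i * x0 ^ (\<mu> - i)) = (\<Sum>i\<le>\<mu>. coeff W (\<mu> - i) * x0 ^ (\<mu> - i))"
    by (simp add: w_def revp_nth)
  also have "\<dots> = (\<Sum>j\<le>\<mu>. coeff W j * x0 ^ j)"
    by (rule sum.reindex_bij_witness[of _ "\<lambda>j. \<mu> - j" "\<lambda>j. \<mu> - j"]) auto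
  also have "\<dots> = poly W x0" using dW by (simp add: poly_altdef)
  finally show ?thesis using rW by simp
qed

lemma final_coef:
  fixes Pt :: "complex poly"
  assumes dP: "degree Pt = \<mu>" and mP: "coeff Pt \<mu> = 1"
    and z: "\<And>k. \<nu> < k \<Longrightarrow> k \<le> \<nu> + \<mu> \<Longrightarrow> (revp \<mu> Pt * Fps s) $ k = 0"
  shows "detFi s \<nu> \<mu> 1 = revp \<mu> Pt $ 1 * detF s \<nu> \<mu>"
proof (cases "\<mu> = 0")
  case True then show ?thesis by (simp add: detFi_def revp_nth)
next
  case False
  define w where "w j = revp \<mu> Pt $ j" for j
  have w0: "w 0 = 1" using mP by (simp add: w_def revp_nth)
  have hi: "\<And>j. \<mu> < j \<Longrightarrow> revp \<mu> Pt $ j = 0" by (simp add: revp_nth)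
  have eqs: "\<And>i. i < \<mu> \<Longrightarrow> (\<Sum>j\<le>\<mu>. w j * Fk s (int \<nu> + 1 + int i - int j)) = 0"
    unfolding w_def by (rule pade_to_eqs[OF hi z])
  show ?thesis using cramer_F[OF w0 eqs, of 1] False by (simp add: detFi_def detF_def w_def)
qed

lemma PL4: "PL [b, a, c, d] = lin b * (lin a * (lin c * lin d))"
  by (simp add: PL_def)

lemma odd_main:
  fixes Z P Pt :: "complex poly" and a b cL :: complex and m :: nat
  assumes m1: "m \<ge> 1"
    and fA: "Z - [:cL:] = [:-b,1:] * P ^ 2"
    and fB: "Z + [:cL:] = [:-a,1:] * [:-1,1:] * [:1,1:] * Pt ^ 2"
    and dP: "degree P = m" "coeff P m = 1"
    and dPt: "degree Pt = m - 1" "coeff Pt (m - 1) = 1"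
    and s1: "\<And>k. s1 k = (- (a ^ k) - 1 - (-1) ^ k - b ^ k) / 2"
    and s2: "\<And>k. s2 k = (a ^ k + 1 + (-1) ^ k + b ^ k) / 2"
  shows "b ^ (m + 1) * detF s1 (m - 1) (m + 1) + (\<Sum>i=1..m+1. b ^ (m + 1 - i) * detFi s1 (m - 1) (m + 1) i) = 0"
    and "- 2 * detFi s2 (m + 1) (m - 1) 1 + (a + coeff Z (2 * m)) * detF s2 (m + 1) (m - 1) = 0"
proof -
  define W where "W = [:-b,1:] * P"
  define N0 where "N0 = (m - 1) + (m - 1)"
  have Pnz: "P \<noteq> 0" using dP by auto
  have dW: "degree W = m + 1" using dP Pnz by (simp add: W_def degree_mult_eq del: mult_pCons_left)
  have mW: "coeff W (m + 1) = 1" using dW dP by (metis W_def add.commute lead_coeff_mult lead_coeff_pCons(1) one_neq_zero mult_1 pCons_one plus_1_eq_Suc)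
  have rW: "poly W b = 0" by (simp add: W_def)
  have dPP: "degree (Pt * Pt) \<le> N0" using dPt unfolding N0_def by (metis degree_mult_le)
  have e1: "W * W = [:-b,1:] * ([:-a,1:] * ([:-1,1:] * ([:1,1:] * (Pt * Pt)))) - smult (2 * cL) ([:-b,1:] * 1)"
  proof -
    have "W * W = [:-b,1:] * ([:-b,1:] * P ^ 2)" by (simp only: W_def power2_eq_square mult_ac)
    also have "\<dots> = [:-b,1:] * (Z - [:cL:])" by (simp only: fA)
    also have "Z - [:cL:] = (Z + [:cL:]) - [:2 * cL:]" by simp
    also have "[:-b,1:] * ((Z + [:cL:]) - [:2 * cL:]) = [:-b,1:] * (Z + [:cL:]) - [:-b,1:] * [:2 * cL:]"
      by (rule right_diff_distrib)
    also have "[:-b,1:] * [:2 * cL:] = smult (2 * cL) ([:-b,1:] * 1)" by simp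
    also have "[:-b,1:] * (Z + [:cL:]) = [:-b,1:] * ([:-a,1:] * ([:-1,1:] * ([:1,1:] * (Pt * Pt))))"
      by (simp only: fB power2_eq_square mult_ac)
    finally show ?thesis .
  qed
  define A where "A = revp (m + 1) W"
  define Bf where "Bf = revp (m - 1) Pt"
  define H where "H = Fps s1"
  define G where "G = Fps s2"
  define Q where "Q = PL [b, a, 1, -1]"
  define XN where "XN = (fps_X :: complex fps) ^ (2 * m + 1)"
  have NN: "2 * m + 2 = Suc (Suc (Suc (Suc N0)))" using m1 by (simp add: N0_def)
  have E1: "A * A = Q * (Bf * Bf) - fps_const (2 * cL) * (lin b * XN)"
  proof -
    have "A * A = revp ((m + 1) + (m + 1)) (W * W)" unfolding A_def by (rule revp_sq[symmetric]) (simp add: dW)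
    also have "(m + 1) + (m + 1) = Suc (Suc (Suc (Suc N0)))" using NN by simp
    also have "revp \<dots> (W * W) = revp (Suc (Suc (Suc (Suc N0)))) ([:-b,1:] * ([:-a,1:] * ([:-1,1:] * ([:1,1:] * (Pt * Pt)))))
        - fps_const (2 * cL) * revp (Suc (Suc (Suc (Suc N0)))) ([:-b,1:] * 1)"
      unfolding e1 by (simp only: revp_diff revp_smult)
    also have "revp (Suc (Suc (Suc (Suc N0)))) ([:-b,1:] * ([:-a,1:] * ([:-1,1:] * ([:1,1:] * (Pt * Pt)))))
        = lin b * (lin a * (lin 1 * (lin (-1) * revp N0 (Pt * Pt))))"
      using dPP by (simp add: revp_lin_mult revp_lin_mult1 degree_mult_le order_trans[OF degree_mult_le] del: mult_pCons_left)
    also have "revp N0 (Pt * Pt) = Bf * Bf" unfolding N0_def Bf_def by (rule revp_sq) (simp add: dPt)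
    also have "revp (Suc (Suc (Suc (Suc N0)))) ([:-b,1:] * 1) = lin b * XN"
      using NN by (subst revp_lin_mult) (auto simp: revp_one XN_def)
    finally show ?thesis by (simp add: Q_def PL4 mult_ac)
  qed
  have "s1 k = ((\<Sum>x\<leftarrow>[]. x ^ k) - (\<Sum>x\<leftarrow>[b, a, 1, -1]. x ^ k)) / 2" for k
    unfolding s1 by (simp add: field_simps)
  from Fps_sq[of s1, OF this] have Hsq: "H ^ 2 * Q = 1" unfolding H_def Q_def by (simp add: PL_def)
  have "s2 k = ((\<Sum>x\<leftarrow>[b, a, 1, -1]. x ^ k) - (\<Sum>x\<leftarrow>[]. x ^ k)) / 2" for k
    unfolding s2 by (simp add: field_simps)
  from Fps_sq[of s2, OF this] have Gsq: "G ^ 2 = Q" unfolding G_def Q_def by (simp add: PL_def)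
  have A0: "A $ 0 = 1" using mW by (simp add: A_def revp_nth)
  have B0: "Bf $ 0 = 1" using dPt by (simp add: Bf_def revp_nth)
  have H0: "H $ 0 = 1" "G $ 0 = 1" by (simp_all add: H_def G_def)
  have Bhi: "Bf $ k = 0" if "m - 1 < k" for k using that by (simp add: Bf_def revp_nth)
  have Ahi: "A $ k = 0" if "m + 1 < k" for k using that by (simp add: A_def revp_nth)
  have I1: "1 * (A * H - Bf) * (A * H + Bf) = fps_X ^ (2 * m + 1) * (- (fps_const (2 * cL) * lin b * H ^ 2))"
  proof -
    have "1 * (A * H - Bf) * (A * H + Bf) = (A * A) * H ^ 2 - Bf * Bf"
      by (simp add: algebra_simps power2_eq_square)
    also have "\<dots> = (H ^ 2 * Q) * (Bf * Bf) - Bf * Bf - fps_const (2 * cL) * lin b * H ^ 2 * XN"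
      unfolding E1 by (simp add: algebra_simps)
    also have "\<dots> = fps_X ^ (2 * m + 1) * (- (fps_const (2 * cL) * lin b * H ^ 2))"
      unfolding Hsq XN_def by (simp add: algebra_simps)
    finally show ?thesis .
  qed
  have P1: "(A * H) $ k = Bf $ k" if "k < 2 * m + 1" for k
    by (rule pade_core[OF I1 _ that]) (simp add: A0 B0 H0)
  show "b ^ (m + 1) * detF s1 (m - 1) (m + 1) + (\<Sum>i=1..m+1. b ^ (m + 1 - i) * detFi s1 (m - 1) (m + 1) i) = 0"
  proof (rule final_eval[OF dW mW rW])
    fix k assume "m - 1 < k" "k \<le> m - 1 + (m + 1)"
    thus "(revp (m + 1) W * Fps s1) $ k = 0" using P1[of k] Bhi[of k] m1
      by (simp add: A_def H_def)
  qed
  have I2: "1 * (Bf * G - A) * (Bf * G + A) = fps_X ^ (2 * m + 1) * (fps_const (2 * cL) * lin b)"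
  proof -
    have "1 * (Bf * G - A) * (Bf * G + A) = (Bf * Bf) * G ^ 2 - A * A"
      by (simp add: algebra_simps power2_eq_square)
    also have "\<dots> = fps_X ^ (2 * m + 1) * (fps_const (2 * cL) * lin b)"
      unfolding E1 Gsq XN_def by (simp add: algebra_simps)
    finally show ?thesis .
  qed
  have P2: "(Bf * G) $ k = A $ k" if "k < 2 * m + 1" for k
    by (rule pade_core[OF I2 _ that]) (simp add: A0 B0 H0)
  have FC: "detFi s2 (m + 1) (m - 1) 1 = Bf $ 1 * detF s2 (m + 1) (m - 1)"
    unfolding Bf_def
  proof (rule final_coef[OF dPt])
    fix k assume "m + 1 < k" "k \<le> m + 1 + (m - 1)"
    thus "(revp (m - 1) Pt * Fps s2) $ k = 0" using P2[of k] Ahi[of k] m1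
      by (simp add: Bf_def G_def)
  qed
  have ZB: "Z + [:cL:] = [:-a,1:] * ([:-1,1:] * ([:1,1:] * (Pt * Pt)))"
    unfolding fB by (simp only: power2_eq_square mult_ac)
  have NN3: "2 * m + 1 = Suc (Suc (Suc N0))" using m1 by (simp add: N0_def)
  have "revp (2 * m + 1) (Z + [:cL:]) = lin a * (lin 1 * (lin (-1) * revp N0 (Pt * Pt)))"
    unfolding ZB NN3
    using dPP by (simp add: revp_lin_mult revp_lin_mult1 degree_mult_le order_trans[OF degree_mult_le] del: mult_pCons_left)
  also have "revp N0 (Pt * Pt) = Bf * Bf" unfolding N0_def Bf_def by (rule revp_sq) (simp add: dPt)
  finally have RZ: "revp (2 * m + 1) (Z + [:cL:]) = lin a * (lin 1 * (lin (-1) * (Bf * Bf)))" .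
  have "revp (2 * m + 1) (Z + [:cL:]) $ 1 = coeff Z (2 * m)"
    using m1 by (auto simp: revp_nth coeff_pCons split: nat.split)
  moreover have "(lin a * (lin 1 * (lin (-1) * (Bf * Bf)))) $ 1 = - a + 2 * Bf $ 1"
    using B0 by (simp add: nth1_mult)
  ultimately have cZ: "coeff Z (2 * m) = - a + 2 * Bf $ 1" using RZ by simp
  show "- 2 * detFi s2 (m + 1) (m - 1) 1 + (a + coeff Z (2 * m)) * detF s2 (m + 1) (m - 1) = 0"
    unfolding FC cZ by (simp add: algebra_simps)
qed

lemma even_main:
  fixes Z P Pt :: "complex poly" and a b cL :: complex and m :: nat
  assumes fA: "Z - [:cL:] = [:-b,1:] * [:1,1:] * P ^ 2"
    and fB: "Z + [:cL:] = [:-a,1:] * [:-1,1:] * Pt ^ 2"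
    and dP: "degree P = m" "coeff P m = 1"
    and dPt: "degree Pt = m" "coeff Pt m = 1"
    and s1: "\<And>k. s1 k = (- (a ^ k) + 1 - (-1) ^ k - b ^ k) / 2"
    and s2: "\<And>k. s2 k = (a ^ k + 1 + (-1) ^ k - b ^ k) / 2"
  shows "a ^ (m + 1) * detF s1 m (m + 1) + (\<Sum>i=1..m+1. a ^ (m + 1 - i) * detFi s1 m (m + 1) i) = 0"
    and "- 2 * detFi s2 (m + 1) m 1 + (a + 1 + coeff Z (2 * m + 1)) * detF s2 (m + 1) m = 0"
proof -
  define W where "W = [:-a,1:] * Pt"
  define V where "V = [:1,1:] * P"
  define N0 where "N0 = m + m"
  have Pnz: "P \<noteq> 0" "Pt \<noteq> 0" using dP dPt by auto
  have dW: "degree W = m + 1" using dPt Pnz by (simp add: W_def degree_mult_eq del: mult_pCons_left)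
  have mW: "coeff W (m + 1) = 1" using dW dPt by (metis W_def add.commute lead_coeff_mult lead_coeff_pCons(1) one_neq_zero mult_1 pCons_one plus_1_eq_Suc)
  have rW: "poly W a = 0" by (simp add: W_def)
  have dV: "degree V = m + 1" using dP Pnz by (simp add: V_def degree_mult_eq del: mult_pCons_left)
  have dPP: "degree (P * P) \<le> N0" "degree (Pt * Pt) \<le> N0" using dP dPt unfolding N0_def by (metis degree_mult_le)+
  have dWW: "degree (W * W) \<le> Suc (Suc N0)" "degree (V * V) \<le> Suc (Suc N0)"
    using dW dV unfolding N0_def by (metis degree_mult_le add_Suc_right add_Suc plus_1_eq_Suc add.commute)+
  have e1: "[:-1,1:] * (W * W) = [:-a,1:] * ([:-b,1:] * ([:1,1:] * (P * P))) + smult (2 * cL) ([:-a,1:] * 1)"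
  proof -
    have "[:-1,1:] * (W * W) = [:-a,1:] * ([:-a,1:] * [:-1,1:] * Pt ^ 2)" by (simp only: W_def power2_eq_square mult_ac)
    also have "\<dots> = [:-a,1:] * (Z + [:cL:])" by (simp only: fB)
    also have "Z + [:cL:] = (Z - [:cL:]) + [:2 * cL:]" by simp
    also have "[:-a,1:] * ((Z - [:cL:]) + [:2 * cL:]) = [:-a,1:] * (Z - [:cL:]) + [:-a,1:] * [:2 * cL:]"
      by (rule distrib_left)
    also have "[:-a,1:] * [:2 * cL:] = smult (2 * cL) ([:-a,1:] * 1)" by simp
    also have "[:-a,1:] * (Z - [:cL:]) = [:-a,1:] * ([:-b,1:] * ([:1,1:] * (P * P)))"
      by (simp only: fA power2_eq_square mult_ac)
    finally show ?thesis .
  qed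
  have e2: "[:-b,1:] * ([:1,1:] * ([:-a,1:] * ([:-1,1:] * (Pt * Pt)))) = [:-b,1:] * ([:-b,1:] * (V * V)) + smult (2 * cL) ([:-b,1:] * ([:1,1:] * 1))"
  proof -
    have "[:-b,1:] * ([:1,1:] * ([:-a,1:] * ([:-1,1:] * (Pt * Pt)))) = [:-b,1:] * [:1,1:] * (Z + [:cL:])"
      by (simp only: fB power2_eq_square mult_ac)
    also have "Z + [:cL:] = (Z - [:cL:]) + [:2 * cL:]" by simp
    also have "[:-b,1:] * [:1,1:] * ((Z - [:cL:]) + [:2 * cL:]) = [:-b,1:] * [:1,1:] * (Z - [:cL:]) + [:-b,1:] * [:1,1:] * [:2 * cL:]"
      by (rule distrib_left)
    also have "[:-b,1:] * [:1,1:] * [:2 * cL:] = smult (2 * cL) ([:-b,1:] * ([:1,1:] * 1))" by simp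
    also have "[:-b,1:] * [:1,1:] * (Z - [:cL:]) = [:-b,1:] * ([:-b,1:] * (V * V))"
      by (simp only: fA V_def power2_eq_square mult_ac)
    finally show ?thesis .
  qed
  define A where "A = revp (m + 1) W"
  define Bf where "Bf = revp m P"
  define Ct where "Ct = revp m Pt"
  define Vf where "Vf = revp (m + 1) V"
  define H where "H = Fps s1"
  define G where "G = Fps s2"
  define XN where "XN = (fps_X :: complex fps) ^ (2 * m + 2)"
  have AA: "revp (Suc (Suc N0)) (W * W) = A * A"
    unfolding A_def using revp_sq[of W "m + 1"] dW by (simp add: N0_def)
  have VV: "revp (Suc (Suc N0)) (V * V) = Vf * Vf"
    unfolding Vf_def using revp_sq[of V "m + 1"] dV by (simp add: N0_def)
  have BB: "revp N0 (P * P) = Bf * Bf" "revp N0 (Pt * Pt) = Ct * Ct"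
    unfolding N0_def Bf_def Ct_def by (rule revp_sq, simp add: dP dPt)+
  have XX: "revp (Suc N) 1 = fps_X ^ Suc N" for N by (simp add: revp_one)
  have NX: "Suc (Suc N0) = 2 * m + 2" by (simp add: N0_def)
  have E1: "lin 1 * (A * A) = lin a * (lin b * (lin (-1) * (Bf * Bf))) + fps_const (2 * cL) * (lin a * XN)"
  proof -
    have "lin 1 * (A * A) = revp (Suc (Suc (Suc N0))) ([:-1,1:] * (W * W))"
      using dWW by (simp add: revp_lin_mult AA del: mult_pCons_left)
    also have "\<dots> = revp (Suc (Suc (Suc N0))) ([:-a,1:] * ([:-b,1:] * ([:1,1:] * (P * P))))
       + fps_const (2 * cL) * revp (Suc (Suc (Suc N0))) ([:-a,1:] * 1)"
      unfolding e1 by (simp only: revp_add revp_smult)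
    also have "revp (Suc (Suc (Suc N0))) ([:-a,1:] * ([:-b,1:] * ([:1,1:] * (P * P)))) = lin a * (lin b * (lin (-1) * (Bf * Bf)))"
      using dPP by (simp add: revp_lin_mult revp_lin_mult1 BB degree_mult_le order_trans[OF degree_mult_le] del: mult_pCons_left)
    also have "revp (Suc (Suc (Suc N0))) ([:-a,1:] * 1) = lin a * XN"
      by (subst revp_lin_mult) (auto simp: revp_one XN_def N0_def)
    finally show ?thesis .
  qed
  have E2: "lin b * (lin (-1) * (lin a * (lin 1 * (Ct * Ct)))) = lin b * (lin b * (Vf * Vf)) + fps_const (2 * cL) * (lin b * (lin (-1) * XN))"
  proof -
    have "lin b * (lin (-1) * (lin a * (lin 1 * (Ct * Ct)))) = revp (Suc (Suc (Suc (Suc N0)))) ([:-b,1:] * ([:1,1:] * ([:-a,1:] * ([:-1,1:] * (Pt * Pt)))))"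
      using dPP by (simp add: revp_lin_mult revp_lin_mult1 BB degree_mult_le order_trans[OF degree_mult_le] del: mult_pCons_left)
    also have "\<dots> = revp (Suc (Suc (Suc (Suc N0)))) ([:-b,1:] * ([:-b,1:] * (V * V)))
       + fps_const (2 * cL) * revp (Suc (Suc (Suc (Suc N0)))) ([:-b,1:] * ([:1,1:] * 1))"
      unfolding e2 by (simp only: revp_add revp_smult)
    also have "revp (Suc (Suc (Suc (Suc N0)))) ([:-b,1:] * ([:-b,1:] * (V * V))) = lin b * (lin b * (Vf * Vf))"
      using dWW by (simp add: revp_lin_mult VV degree_mult_le order_trans[OF degree_mult_le] del: mult_pCons_left)
    also have "revp (Suc (Suc (Suc (Suc N0)))) ([:-b,1:] * ([:1,1:] * 1)) = lin b * revp (Suc (Suc (Suc N0))) ([:1,1:] * 1)"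
      by (rule revp_lin_mult) (simp del: mult_pCons_left)
    also have "revp (Suc (Suc (Suc N0))) ([:1,1:] * 1) = lin (-1) * revp (Suc (Suc N0)) 1"
      by (rule revp_lin_mult1) simp
    also have "revp (Suc (Suc N0)) 1 = XN" unfolding revp_one NX XN_def ..
    finally show ?thesis .
  qed
  have "s1 k = ((\<Sum>x\<leftarrow>[1]. x ^ k) - (\<Sum>x\<leftarrow>[-1, a, b]. x ^ k)) / 2" for k
    unfolding s1 by (simp add: field_simps)
  from Fps_sq[of s1, OF this] have Hsq: "H ^ 2 * (lin (-1) * (lin a * lin b)) = lin 1" unfolding H_def by (simp add: PL_def)
  have "s2 k = ((\<Sum>x\<leftarrow>[a, 1, -1]. x ^ k) - (\<Sum>x\<leftarrow>[b]. x ^ k)) / 2" for k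
    unfolding s2 by (simp add: field_simps)
  from Fps_sq[of s2, OF this] have Gsq: "G ^ 2 * lin b = lin a * (lin 1 * lin (-1))" unfolding G_def by (simp add: PL_def)
  have A0: "A $ 0 = 1" using mW by (simp add: A_def revp_nth)
  have B0: "Bf $ 0 = 1" "Ct $ 0 = 1" using dP dPt by (simp_all add: Bf_def Ct_def revp_nth)
  have "lead_coeff V = 1" unfolding V_def using dP by (simp add: lead_coeff_mult del: mult_pCons_left)
  hence V0: "Vf $ 0 = 1" using dV by (simp add: Vf_def revp_nth)
  have H0: "H $ 0 = 1" "G $ 0 = 1" by (simp_all add: H_def G_def)
  have Bhi: "Bf $ k = 0" if "m < k" for k using that by (simp add: Bf_def revp_nth)
  have Vhi: "Vf $ k = 0" if "m + 1 < k" for k using that by (simp add: Vf_def revp_nth)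
  have I1: "lin 1 * (A * H - Bf) * (A * H + Bf) = fps_X ^ (2 * m + 2) * (fps_const (2 * cL) * lin a * H ^ 2)"
  proof -
    have "lin 1 * (A * H - Bf) * (A * H + Bf) = (lin 1 * (A * A)) * H ^ 2 - lin 1 * (Bf * Bf)"
      by (simp add: algebra_simps power2_eq_square)
    also have "\<dots> = (H ^ 2 * (lin (-1) * (lin a * lin b))) * (Bf * Bf) - lin 1 * (Bf * Bf) + fps_const (2 * cL) * lin a * H ^ 2 * XN"
      unfolding E1 by (simp add: algebra_simps)
    also have "\<dots> = fps_X ^ (2 * m + 2) * (fps_const (2 * cL) * lin a * H ^ 2)"
      unfolding Hsq XN_def by (simp add: algebra_simps)
    finally show ?thesis .
  qed
  have P1: "(A * H) $ k = Bf $ k" if "k < 2 * m + 2" for k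
    by (rule pade_core[OF I1 _ that]) (simp add: A0 B0 H0)
  show "a ^ (m + 1) * detF s1 m (m + 1) + (\<Sum>i=1..m+1. a ^ (m + 1 - i) * detFi s1 m (m + 1) i) = 0"
  proof (rule final_eval[OF dW mW rW])
    fix k assume "m < k" "k \<le> m + (m + 1)"
    thus "(revp (m + 1) W * Fps s1) $ k = 0" using P1[of k] Bhi[of k]
      by (simp add: A_def H_def)
  qed
  have I2: "(lin b * lin b) * (Ct * G - Vf) * (Ct * G + Vf) = fps_X ^ (2 * m + 2) * (fps_const (2 * cL) * (lin b * lin (-1)))"
  proof -
    have "(lin b * lin b) * (Ct * G - Vf) * (Ct * G + Vf) = lin b * (G ^ 2 * lin b) * (Ct * Ct) - lin b * (lin b * (Vf * Vf))"
      by (simp add: algebra_simps power2_eq_square)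
    also have "\<dots> = lin b * (lin (-1) * (lin a * (lin 1 * (Ct * Ct)))) - lin b * (lin b * (Vf * Vf))"
      unfolding Gsq by (simp add: algebra_simps)
    also have "\<dots> = fps_X ^ (2 * m + 2) * (fps_const (2 * cL) * (lin b * lin (-1)))"
      unfolding E2 XN_def by (simp add: algebra_simps)
    finally show ?thesis .
  qed
  have P2: "(Ct * G) $ k = Vf $ k" if "k < 2 * m + 2" for k
    by (rule pade_core[OF I2 _ that]) (simp add: V0 B0 H0)
  have FC: "detFi s2 (m + 1) m 1 = Ct $ 1 * detF s2 (m + 1) m"
    unfolding Ct_def
  proof (rule final_coef[OF dPt])
    fix k assume "m + 1 < k" "k \<le> m + 1 + m"
    thus "(revp m Pt * Fps s2) $ k = 0" using P2[of k] Vhi[of k]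
      by (simp add: Ct_def G_def)
  qed
  have ZB: "Z + [:cL:] = [:-a,1:] * ([:-1,1:] * (Pt * Pt))"
    unfolding fB by (simp only: power2_eq_square mult_ac)
  have "revp (Suc (Suc N0)) (Z + [:cL:]) = lin a * (lin 1 * (Ct * Ct))"
    unfolding ZB
    using dPP by (simp add: revp_lin_mult BB degree_mult_le order_trans[OF degree_mult_le] del: mult_pCons_left)
  moreover have "Suc (Suc N0) = 2 * m + 2" by (simp add: N0_def)
  ultimately have RZ: "revp (2 * m + 2) (Z + [:cL:]) = lin a * (lin 1 * (Ct * Ct))" by metis
  have "revp (2 * m + 2) (Z + [:cL:]) $ 1 = coeff Z (2 * m + 1)"
    by (auto simp: revp_nth coeff_pCons split: nat.split)
  moreover have "(lin a * (lin 1 * (Ct * Ct))) $ 1 = - a - 1 + 2 * Ct $ 1"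
    using B0 by (simp add: nth1_mult)
  ultimately have cZ: "coeff Z (2 * m + 1) = - a - 1 + 2 * Ct $ 1" using RZ by simp
  show "- 2 * detFi s2 (m + 1) m 1 + (a + 1 + coeff Z (2 * m + 1)) * detF s2 (m + 1) m = 0"
    unfolding FC cZ by (simp add: algebra_simps)
qed



lemma deg_shapeA:
  fixes P :: "complex poly"
  assumes "lead_coeff P = 1"
  shows "degree ([:-b,1:] * [:1,1:] ^ e * P ^ 2) = 1 + e + 2 * degree P"
proof -
  have P0: "P \<noteq> 0" using assms by auto
  have "degree ([:-b,1:] * [:1,1:] ^ e * P ^ 2) = degree ([:-b,1:] * [:1,1:] ^ e) + degree (P ^ 2)"
    by (rule degree_mult_eq) (use P0 in \<open>auto simp del: mult_pCons_left\<close>)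
  also have "degree ([:-b,1:] * [:1,1:] ^ e) = 1 + e"
    by (subst degree_mult_eq) (auto simp: degree_linear_power simp del: mult_pCons_left)
  also have "degree (P ^ 2) = 2 * degree P" using P0 by (simp add: degree_power_eq)
  finally show ?thesis .
qed

lemma deg_shapeB:
  fixes P :: "complex poly"
  assumes "lead_coeff P = 1"
  shows "degree ([:-a,1:] * [:-1,1:] * [:1,1:] ^ e * P ^ 2) = 2 + e + 2 * degree P"
proof -
  have P0: "P \<noteq> 0" using assms by auto
  have "degree ([:-a,1:] * [:-1,1:] * [:1,1:] ^ e * P ^ 2) = degree ([:-a,1:] * [:-1,1:] * [:1,1:] ^ e) + degree (P ^ 2)"
    by (rule degree_mult_eq) (use P0 in \<open>auto simp del: mult_pCons_left\<close>)
  also have "degree ([:-a,1:] * [:-1,1:] * [:1,1:] ^ e) = 2 + e"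
  proof -
    have nz: "[:-a,1:] * [:-1,1:] \<noteq> (0 :: complex poly)" by (simp del: mult_pCons_left)
    have "degree ([:-a,1:] * [:-1,1:]) = 2" by (subst degree_mult_eq) (auto simp del: mult_pCons_left)
    moreover have "degree (([:-a,1:] * [:-1,1:]) * [:1,1:] ^ e) = degree ([:-a,1:] * [:-1,1:]) + degree ([:1,1:] ^ e :: complex poly)"
      using nz by (intro degree_mult_eq) auto
    ultimately show ?thesis by (simp add: degree_linear_power)
  qed
  also have "degree (P ^ 2) = 2 * degree P" using P0 by (simp add: degree_power_eq)
  finally show ?thesis by simp
qed

theorem corollary3:
  fixes n :: nat and \<sigma> \<alpha> \<beta> L :: real and Z :: "complex poly"
  assumes "n \<ge> 2"
    and "\<sigma> > (tan (pi / (2 * real n)))\<^sup>2"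
    and "is_zolotarev n \<sigma> Z"
    and "L = sup_norm_I Z"
    and "1 < \<alpha>" and "\<alpha> < \<beta>"
    and "{x::complex. poly Z x \<in> complex_of_real ` {-L..L}} =
         complex_of_real ` ({-1..1} \<union> {\<alpha>..\<beta>})"
  shows "(\<forall>m. n = 2 * m + 1 \<longrightarrow>
            (let s1 = (\<lambda>k. complex_of_real ((- (\<alpha> ^ k) - 1 - (-1) ^ k - \<beta> ^ k) / 2));
                 s2 = (\<lambda>k. complex_of_real ((\<alpha> ^ k + 1 + (-1) ^ k + \<beta> ^ k) / 2))
             in complex_of_real \<beta> ^ (m + 1) * detF s1 (m - 1) (m + 1)
                  + (\<Sum>i = 1..m + 1. complex_of_real \<beta> ^ (m + 1 - i) * detFi s1 (m - 1) (m + 1) i) = 0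
              \<and> - 2 * detFi s2 (m + 1) (m - 1) 1
                  + complex_of_real (\<alpha> - real n * \<sigma>) * detF s2 (m + 1) (m - 1) = 0))
       \<and> (\<forall>m. n = 2 * m + 2 \<longrightarrow>
            (let s1 = (\<lambda>k. complex_of_real ((- (\<alpha> ^ k) + 1 - (-1) ^ k - \<beta> ^ k) / 2));
                 s2 = (\<lambda>k. complex_of_real ((\<alpha> ^ k + 1 + (-1) ^ k - \<beta> ^ k) / 2))
             in complex_of_real \<alpha> ^ (m + 1) * detF s1 m (m + 1)
                  + (\<Sum>i = 1..m + 1. complex_of_real \<alpha> ^ (m + 1 - i) * detFi s1 m (m + 1) i) = 0
              \<and> - 2 * detFi s2 (m + 1) m 1
                  + complex_of_real (\<alpha> + 1 - real n * \<sigma>) * detF s2 (m + 1) m = 0))"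
proof -
  obtain P Pt e1 e2 where st: "e1 + e2 = (1::nat)"
    "Z - [:complex_of_real L:] = [:- complex_of_real \<beta>, 1:] * [:1,1:] ^ e1 * P ^ 2"
    "Z + [:complex_of_real L:] = [:- complex_of_real \<alpha>, 1:] * [:-1,1:] * [:1,1:] ^ e2 * Pt ^ 2"
    "lead_coeff P = 1" "lead_coeff Pt = 1"
    using structure_main[OF assms(1) assms(3) assms(4) assms(5) assms(6) assms(7)] by blast
  have zc: "degree Z = n" "coeff Z (n - 1) = - complex_of_real (real n * \<sigma>)"
    using assms(3) by (auto simp: is_zolotarev_def zol_class_def)
  have d1: "degree (Z - [:complex_of_real L:]) = n"
  proof -
    have "degree (Z + [:- complex_of_real L:]) = n" using zc assms(1) by (subst degree_add_eq_left) auto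
    moreover have "Z - [:complex_of_real L:] = Z + [:- complex_of_real L:]" by simp
    ultimately show ?thesis by metis
  qed
  have d2: "degree (Z + [:complex_of_real L:]) = n" using zc assms(1) by (subst degree_add_eq_left) auto
  have DA: "n = 1 + e1 + 2 * degree P" using d1 st(2) deg_shapeA[OF st(4)] by metis
  have DB: "n = 2 + e2 + 2 * degree Pt" using d2 st(3) deg_shapeB[OF st(5)] by metis
  have cP: "coeff P (degree P) = 1" "coeff Pt (degree Pt) = 1" using st(4,5) by auto
  show ?thesis
  proof (intro conjI allI impI)
    fix m assume nm: "n = 2 * m + 1"
    have e: "e1 = 0" "e2 = 1" using st(1) DA nm by presburger+
    have dm: "degree P = m" "degree Pt = m - 1" "m \<ge> 1" using DA DB e nm assms(1) by auto
    have fA: "Z - [:complex_of_real L:] = [:- complex_of_real \<beta>, 1:] * P ^ 2" using st(2) e by simp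
    have fB: "Z + [:complex_of_real L:] = [:- complex_of_real \<alpha>, 1:] * [:-1,1:] * [:1,1:] * Pt ^ 2" using st(3) e by simp
    define s1 where "s1 = (\<lambda>k. complex_of_real ((- (\<alpha> ^ k) - 1 - (-1) ^ k - \<beta> ^ k) / 2))"
    define s2 where "s2 = (\<lambda>k. complex_of_real ((\<alpha> ^ k + 1 + (-1) ^ k + \<beta> ^ k) / 2))"
    have s1': "\<And>k. s1 k = (- (complex_of_real \<alpha> ^ k) - 1 - (-1) ^ k - complex_of_real \<beta> ^ k) / 2"
      by (simp add: s1_def)
    have s2': "\<And>k. s2 k = (complex_of_real \<alpha> ^ k + 1 + (-1) ^ k + complex_of_real \<beta> ^ k) / 2"
      by (simp add: s2_def)
    note R = odd_main[OF dm(3) fA fB dm(1) _ dm(2) _ s1' s2']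
    have cz: "complex_of_real \<alpha> + coeff Z (2 * m) = complex_of_real (\<alpha> - real n * \<sigma>)"
      using zc(2) nm by simp
    show "let s1 = (\<lambda>k. complex_of_real ((- (\<alpha> ^ k) - 1 - (-1) ^ k - \<beta> ^ k) / 2));
                 s2 = (\<lambda>k. complex_of_real ((\<alpha> ^ k + 1 + (-1) ^ k + \<beta> ^ k) / 2))
             in complex_of_real \<beta> ^ (m + 1) * detF s1 (m - 1) (m + 1)
                  + (\<Sum>i = 1..m + 1. complex_of_real \<beta> ^ (m + 1 - i) * detFi s1 (m - 1) (m + 1) i) = 0
              \<and> - 2 * detFi s2 (m + 1) (m - 1) 1
                  + complex_of_real (\<alpha> - real n * \<sigma>) * detF s2 (m + 1) (m - 1) = 0"
      unfolding Let_def s1_def[symmetric] s2_def[symmetric] cz[symmetric]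
      using R cP dm by auto
  next
    fix m assume nm: "n = 2 * m + 2"
    have e: "e1 = 1" "e2 = 0" using st(1) DA nm by presburger+
    have dm: "degree P = m" "degree Pt = m" using DA DB e nm by auto
    have fA: "Z - [:complex_of_real L:] = [:- complex_of_real \<beta>, 1:] * [:1,1:] * P ^ 2" using st(2) e by simp
    have fB: "Z + [:complex_of_real L:] = [:- complex_of_real \<alpha>, 1:] * [:-1,1:] * Pt ^ 2" using st(3) e by simp
    define s1 where "s1 = (\<lambda>k. complex_of_real ((- (\<alpha> ^ k) + 1 - (-1) ^ k - \<beta> ^ k) / 2))"
    define s2 where "s2 = (\<lambda>k. complex_of_real ((\<alpha> ^ k + 1 + (-1) ^ k - \<beta> ^ k) / 2))"
    have s1': "\<And>k. s1 k = (- (complex_of_real \<alpha> ^ k) + 1 - (-1) ^ k - complex_of_real \<beta> ^ k) / 2"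
      by (simp add: s1_def)
    have s2': "\<And>k. s2 k = (complex_of_real \<alpha> ^ k + 1 + (-1) ^ k - complex_of_real \<beta> ^ k) / 2"
      by (simp add: s2_def)
    note R = even_main[OF fA fB dm(1) _ dm(2) _ s1' s2']
    have cz: "complex_of_real \<alpha> + 1 + coeff Z (2 * m + 1) = complex_of_real (\<alpha> + 1 - real n * \<sigma>)"
      using zc(2) nm by simp
    show "let s1 = (\<lambda>k. complex_of_real ((- (\<alpha> ^ k) + 1 - (-1) ^ k - \<beta> ^ k) / 2));
                 s2 = (\<lambda>k. complex_of_real ((\<alpha> ^ k + 1 + (-1) ^ k - \<beta> ^ k) / 2))
             in complex_of_real \<alpha> ^ (m + 1) * detF s1 m (m + 1)
                  + (\<Sum>i = 1..m + 1. complex_of_real \<alpha> ^ (m + 1 - i) * detFi s1 m (m + 1) i) = 0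
              \<and> - 2 * detFi s2 (m + 1) m 1
                  + complex_of_real (\<alpha> + 1 - real n * \<sigma>) * detF s2 (m + 1) m = 0"
      unfolding Let_def s1_def[symmetric] s2_def[symmetric] cz[symmetric]
      using R cP dm by auto
  qed
qed


end
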